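(* Let $G$, $D$, $F$, $E$, $\Lambda$ be as in the context. Let $M\subseteq\Lambda$ be a left ideal that is right generic with respect to $D$. Let $Y$ be a left $\Lambda$-module and $Z\subseteq Y$ a left $E[D]$-submodule such that $Y$ and $Z$ admit compatible rational structures (a left $\Lambda_F$-module $Y_F$ and an $F[D]$-submodule $Z_F\subseteq Y_F$ with $Y=Y_F\otimes_FE$, $Z=Z_F\otimes_FE$ compatibly with $Z\subseteq Y$), and suppose $Y$ admits an injective $\Lambda$-module homomorphism $Y\to\Lambda$. Then for every left ideal $N\subseteq\Lambda$ isomorphic to $M$ as a left $\Lambda$-module, $\dim\mathrm{Hom}_G(\Lambda/M,Y;Z)\le\dim\mathrm{Hom}_G(\Lambda/N,Y;Z)$.
   Context: $G$ is a finite group, $D\subseteq G$ a subgroup, $F$ a field of characteristic zero over which all irreducible representations of $G$ are defined, $E\supseteq F$, $\Lambda_F=F[G]$, $\Lambda=E[G]=\Lambda_F\otimes_FE$. A right rational $D$-subspace of $\Lambda$ is $V=V_F\otimes_FE$ with $V_F$ a right $F[D]$-submodule of $\Lambda_F$. A left ideal $M$ is right generic with respect to $D$ if $\dim(M\cap V)\le\dim(N\cap V)$ for all right rational $D$-subspaces $V$ and all left ideals $N\cong M$ as left $\Lambda$-modules. For a left ideal $M$, $\mathrm{Hom}_G(\Lambda/M,Y;Z)$ denotes the set of $G$-equivariant homomorphisms $\phi:\Lambda/M\to Y$ with $\phi([1]\bmod M)\in Z$. *)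

theory Defs
  imports Complex_Main "HOL-Algebra.Group" "HOL-Library.Function_Algebras"
begin

(* Elements of a group algebra K[G] (K a subset of the coefficient field 'e,
   e.g. a subfield F or UNIV = E) are functions 'g => 'e supported on the
   carrier of G with values in K.  Addition is pointwise (Function_Algebras);
   the algebra product is convolution (NOT the pointwise product). *)
definition grp_alg :: "('g, 'b) monoid_scheme \<Rightarrow> 'e::field set \<Rightarrow> ('g \<Rightarrow> 'e) set" where
  "grp_alg G K = {a. (\<forall>x. x \<notin> carrier G \<longrightarrow> a x = 0) \<and> (\<forall>x. a x \<in> K)}"

definition sub_alg :: "'g set \<Rightarrow> 'e::field set \<Rightarrow> ('g \<Rightarrow> 'e) set" where
  "sub_alg D K = {a. (\<forall>x. x \<notin> D \<longrightarrow> a x = 0) \<and> (\<forall>x. a x \<in> K)}"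

definition conv :: "('g, 'b) monoid_scheme \<Rightarrow> ('g \<Rightarrow> 'e::field) \<Rightarrow> ('g \<Rightarrow> 'e) \<Rightarrow> 'g \<Rightarrow> 'e" where
  "conv G a b = (\<lambda>x. if x \<in> carrier G
      then (\<Sum>g\<in>carrier G. a g * b (inv\<^bsub>G\<^esub> g \<otimes>\<^bsub>G\<^esub> x)) else 0)"

definition delta :: "'g \<Rightarrow> 'g \<Rightarrow> 'e::field" where
  "delta g = (\<lambda>x. if x = g then 1 else 0)"

definition ascale :: "'e::field \<Rightarrow> ('g \<Rightarrow> 'e) \<Rightarrow> 'g \<Rightarrow> 'e" where
  "ascale c a = (\<lambda>x. c * a x)"

definition is_subfield :: "'e::field set \<Rightarrow> bool" where
  "is_subfield K \<longleftrightarrow> 0 \<in> K \<and> 1 \<in> K \<and> (\<forall>x\<in>K. \<forall>y\<in>K. x + y \<in> K \<and> x * y \<in> K \<and> - x \<in> K)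
      \<and> (\<forall>x\<in>K. x \<noteq> 0 \<longrightarrow> inverse x \<in> K)"

definition K_subspace :: "'e set \<Rightarrow> ('e \<Rightarrow> 'v \<Rightarrow> 'v) \<Rightarrow> 'v::ab_group_add set \<Rightarrow> bool" where
  "K_subspace K sc S \<longleftrightarrow> 0 \<in> S \<and> (\<forall>x\<in>S. \<forall>y\<in>S. x + y \<in> S) \<and> (\<forall>c\<in>K. \<forall>x\<in>S. sc c x \<in> S)"

definition K_indep :: "'e::field set \<Rightarrow> ('e \<Rightarrow> 'v \<Rightarrow> 'v) \<Rightarrow> 'v::ab_group_add set \<Rightarrow> bool" where
  "K_indep K sc S \<longleftrightarrow> (\<forall>T c. finite T \<longrightarrow> T \<subseteq> S \<longrightarrow> (\<forall>t\<in>T. c t \<in> K) \<longrightarrow>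
      (\<Sum>t\<in>T. sc (c t) t) = 0 \<longrightarrow> (\<forall>t\<in>T. c t = 0))"

definition E_span :: "('e::field \<Rightarrow> 'v \<Rightarrow> 'v) \<Rightarrow> 'v::ab_group_add set \<Rightarrow> 'v set" where
  "E_span sc S = {v. \<exists>T c. finite T \<and> T \<subseteq> S \<and> v = (\<Sum>t\<in>T. sc (c t) t)}"

(* S_F is an F-form (rational structure) of S: S = S_F \<otimes>_F E via the natural map *)
definition rational_form :: "'e::field set \<Rightarrow> ('e \<Rightarrow> 'v \<Rightarrow> 'v) \<Rightarrow> 'v::ab_group_add set \<Rightarrow> 'v set \<Rightarrow> bool" where
  "rational_form F sc SF S \<longleftrightarrow> K_subspace F sc SF \<and> SF \<subseteq> S \<and> E_span sc SF = S
      \<and> (\<forall>T\<subseteq>SF. K_indep F sc T \<longrightarrow> K_indep UNIV sc T)"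

definition left_ideal :: "('g, 'b) monoid_scheme \<Rightarrow> 'e::field set \<Rightarrow> ('g \<Rightarrow> 'e) set \<Rightarrow> bool" where
  "left_ideal G K M \<longleftrightarrow> M \<subseteq> grp_alg G K \<and> K_subspace K ascale M
      \<and> (\<forall>a\<in>grp_alg G K. \<forall>m\<in>M. conv G a m \<in> M)"

definition ideal_iso :: "('g, 'b) monoid_scheme \<Rightarrow> ('g \<Rightarrow> 'e::field) set \<Rightarrow> ('g \<Rightarrow> 'e) set \<Rightarrow> bool" where
  "ideal_iso G M N \<longleftrightarrow> (\<exists>f. bij_betw f M N \<and> (\<forall>x\<in>M. \<forall>y\<in>M. f (x + y) = f x + f y)
      \<and> (\<forall>a\<in>grp_alg G UNIV. \<forall>x\<in>M. f (conv G a x) = conv G a (f x)))"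

definition right_rational_sub :: "('g, 'b) monoid_scheme \<Rightarrow> 'g set \<Rightarrow> 'e::field set \<Rightarrow> ('g \<Rightarrow> 'e) set \<Rightarrow> bool" where
  "right_rational_sub G D F V \<longleftrightarrow> (\<exists>VF. VF \<subseteq> grp_alg G F \<and> K_subspace F ascale VF
      \<and> (\<forall>v\<in>VF. \<forall>b\<in>sub_alg D F. conv G v b \<in> VF) \<and> V = E_span ascale VF)"

abbreviation Edim :: "('g \<Rightarrow> 'e::field) set \<Rightarrow> nat" where
  "Edim S \<equiv> vector_space.dim ascale S"

definition right_generic :: "('g, 'b) monoid_scheme \<Rightarrow> 'g set \<Rightarrow> 'e::field set \<Rightarrow> ('g \<Rightarrow> 'e) set \<Rightarrow> bool" where
  "right_generic G D F M \<longleftrightarrow> (\<forall>V N. right_rational_sub G D F V \<longrightarrow> left_ideal G UNIV N \<longrightarrow>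
      ideal_iso G M N \<longrightarrow> Edim (M \<inter> V) \<le> Edim (N \<inter> V))"

(* F is a splitting field for G: every simple F[G]-module (up to isomorphism,
   a minimal left ideal of F[G]) is absolutely simple, i.e. its
   F[G]-endomorphisms are the scalars from F. *)
definition minimal_left_ideal :: "('g, 'b) monoid_scheme \<Rightarrow> 'e::field set \<Rightarrow> ('g \<Rightarrow> 'e) set \<Rightarrow> bool" where
  "minimal_left_ideal G F L \<longleftrightarrow> left_ideal G F L \<and> L \<noteq> {0}
      \<and> (\<forall>L'. left_ideal G F L' \<longrightarrow> L' \<subseteq> L \<longrightarrow> L' = {0} \<or> L' = L)"

definition splitting_field :: "('g, 'b) monoid_scheme \<Rightarrow> 'e::field set \<Rightarrow> bool" where
  "splitting_field G F \<longleftrightarrow> (\<forall>L f. minimal_left_ideal G F L \<longrightarrow>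
      (\<forall>x\<in>L. f x \<in> L) \<longrightarrow> (\<forall>x\<in>L. \<forall>y\<in>L. f (x + y) = f x + f y) \<longrightarrow>
      (\<forall>a\<in>grp_alg G F. \<forall>x\<in>L. f (conv G a x) = conv G a (f x)) \<longrightarrow>
      (\<exists>c\<in>F. \<forall>x\<in>L. f x = ascale c x))"

(* Left E[G]-module structure on a subset Y of a type 'y carrying an E-vector
   space structure sc; the action of E[G] is lm.  E acts compatibly via E\<cdot>1. *)
definition left_module :: "('g, 'b) monoid_scheme \<Rightarrow> 'e::field set \<Rightarrow> ('e \<Rightarrow> 'y \<Rightarrow> 'y)
    \<Rightarrow> (('g \<Rightarrow> 'e) \<Rightarrow> 'y \<Rightarrow> 'y) \<Rightarrow> 'y::ab_group_add set \<Rightarrow> bool" where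
  "left_module G K sc lm Y \<longleftrightarrow> K_subspace K sc Y
      \<and> (\<forall>a\<in>grp_alg G K. \<forall>y\<in>Y. lm a y \<in> Y)
      \<and> (\<forall>a\<in>grp_alg G K. \<forall>y\<in>Y. \<forall>z\<in>Y. lm a (y + z) = lm a y + lm a z)
      \<and> (\<forall>a\<in>grp_alg G K. \<forall>b\<in>grp_alg G K. \<forall>y\<in>Y. lm (a + b) y = lm a y + lm b y)
      \<and> (\<forall>a\<in>grp_alg G K. \<forall>b\<in>grp_alg G K. \<forall>y\<in>Y. lm (conv G a b) y = lm a (lm b y))
      \<and> (\<forall>c\<in>K. \<forall>y\<in>Y. lm (ascale c (delta \<one>\<^bsub>G\<^esub>)) y = sc c y)"

definition D_submodule :: "'g set \<Rightarrow> 'e::field set \<Rightarrow> ('e \<Rightarrow> 'y \<Rightarrow> 'y)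
    \<Rightarrow> (('g \<Rightarrow> 'e) \<Rightarrow> 'y \<Rightarrow> 'y) \<Rightarrow> 'y::ab_group_add set \<Rightarrow> bool" where
  "D_submodule D K sc lm Z \<longleftrightarrow> K_subspace K sc Z \<and> (\<forall>a\<in>sub_alg D K. \<forall>z\<in>Z. lm a z \<in> Z)"

(* Hom_G(\<Lambda>/M, Y; Z): G-equivariant (= E[G]-linear) maps \<Lambda>/M \<rightarrow> Y sending [1] into Z.
   A map \<Lambda>/M \<rightarrow> Y is represented by its composite with \<Lambda> \<rightarrow> \<Lambda>/M, i.e. an
   E[G]-linear map \<Lambda> \<rightarrow> Y vanishing on M (extended by 0 outside \<Lambda>). *)
definition HomG :: "('g, 'b) monoid_scheme \<Rightarrow> ('g \<Rightarrow> 'e::field) set \<Rightarrow> (('g \<Rightarrow> 'e) \<Rightarrow> 'y \<Rightarrow> 'y)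
    \<Rightarrow> 'y::ab_group_add set \<Rightarrow> 'y set \<Rightarrow> (('g \<Rightarrow> 'e) \<Rightarrow> 'y) set" where
  "HomG G M lm Y Z = {\<phi>. (\<forall>x. x \<notin> grp_alg G UNIV \<longrightarrow> \<phi> x = 0)
      \<and> (\<forall>x\<in>grp_alg G UNIV. \<phi> x \<in> Y)
      \<and> (\<forall>x\<in>grp_alg G UNIV. \<forall>y\<in>grp_alg G UNIV. \<phi> (x + y) = \<phi> x + \<phi> y)
      \<and> (\<forall>a\<in>grp_alg G UNIV. \<forall>x\<in>grp_alg G UNIV. \<phi> (conv G a x) = lm a (\<phi> x))
      \<and> (\<forall>m\<in>M. \<phi> m = 0)
      \<and> \<phi> (delta \<one>\<^bsub>G\<^esub>) \<in> Z}"

abbreviation Hdim :: "('e::field \<Rightarrow> 'y \<Rightarrow> 'y) \<Rightarrow> (('g \<Rightarrow> 'e) \<Rightarrow> 'y::ab_group_add) set \<Rightarrow> nat" where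
  "Hdim sc H \<equiv> vector_space.dim (\<lambda>c \<phi>. (\<lambda>x. sc c (\<phi> x))) H"

end

theory Submission
  imports Defs
begin


lemma vs_ascale: "vector_space (ascale :: 'e::field \<Rightarrow> ('a \<Rightarrow> 'e) \<Rightarrow> _)"
  by unfold_locales (auto simp: ascale_def algebra_simps fun_eq_iff)

lemma vs_fun:
  assumes "vector_space sc"
  shows "vector_space (\<lambda>c (\<phi>::'x \<Rightarrow> 'y::ab_group_add) x. sc c (\<phi> x))"
proof -
  interpret vector_space sc by fact
  show ?thesis by unfold_locales (auto simp: fun_eq_iff scale_right_distrib scale_left_distrib)
qed

lemma sumf_apply: "(sum f S) x = (\<Sum>i\<in>S. f i x)"
  by (induction S rule: infinite_finite_induct) auto

lemma ascale_apply[simp]: "ascale c a x = c * a x" by (simp add: ascale_def)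
lemma delta_apply: "delta g x = (if x = g then 1 else 0)" by (simp add: delta_def)

lemma grp_alg_iff: "a \<in> grp_alg G K \<longleftrightarrow> (\<forall>x. x \<notin> carrier G \<longrightarrow> a x = 0) \<and> (\<forall>x. a x \<in> K)"
  by (simp add: grp_alg_def)

lemma grp_algD: "a \<in> grp_alg G K \<Longrightarrow> x \<notin> carrier G \<Longrightarrow> a x = 0"
  by (simp add: grp_alg_def)

lemma grp_alg_UNIV: "a \<in> grp_alg G UNIV \<longleftrightarrow> (\<forall>x. x \<notin> carrier G \<longrightarrow> a x = 0)"
  by (simp add: grp_alg_def)

lemma subfield_sum: "is_subfield K \<Longrightarrow> (\<And>x. x \<in> S \<Longrightarrow> f x \<in> K) \<Longrightarrow> sum f S \<in> K"
  by (induction S rule: infinite_finite_induct) (auto simp: is_subfield_def)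

lemma subfield_UNIV: "is_subfield UNIV" by (simp add: is_subfield_def)

lemma subfield_diff: "is_subfield K \<Longrightarrow> x \<in> K \<Longrightarrow> y \<in> K \<Longrightarrow> x - y \<in> K"
  unfolding is_subfield_def by (metis diff_conv_add_uminus)

lemma subfield_div: "is_subfield K \<Longrightarrow> x \<in> K \<Longrightarrow> y \<in> K \<Longrightarrow> x / y \<in> K"
  unfolding is_subfield_def by (metis divide_inverse inverse_zero)

lemma subfield_of_nat: "is_subfield K \<Longrightarrow> of_nat n \<in> K"
  by (induction n) (auto simp: is_subfield_def)

lemma subfield_infinite: "is_subfield (K::'e::field_char_0 set) \<Longrightarrow> infinite K"
proof
  assume "is_subfield K" "finite K"
  have "range (of_nat :: nat \<Rightarrow> 'e) \<subseteq> K" using subfield_of_nat[OF \<open>is_subfield K\<close>] by auto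
  hence "finite (range (of_nat :: nat \<Rightarrow> 'e))" using \<open>finite K\<close> finite_subset by blast
  moreover have "inj (of_nat :: nat \<Rightarrow> 'e)" by (simp add: inj_on_def)
  ultimately show False using finite_imageD by blast
qed

context
  fixes G :: "('g, 'b) monoid_scheme" (structure)
  assumes grp: "group G" and fin: "finite (carrier G)"
begin

interpretation group G by (rule grp)

lemma grp_alg_add: "a \<in> grp_alg G UNIV \<Longrightarrow> b \<in> grp_alg G UNIV \<Longrightarrow> a + b \<in> grp_alg G UNIV"
  by (simp add: grp_alg_def)

lemma grp_alg_sum: "(\<And>i. i \<in> S \<Longrightarrow> f i \<in> grp_alg G UNIV) \<Longrightarrow> sum f S \<in> grp_alg G UNIV"
  by (induction S rule: infinite_finite_induct) (auto simp: grp_alg_def)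

lemma grp_alg_zero: "0 \<in> grp_alg G UNIV"
  by (simp add: grp_alg_def)

lemma grp_alg_ascale: "a \<in> grp_alg G UNIV \<Longrightarrow> ascale c a \<in> grp_alg G UNIV"
  by (simp add: grp_alg_def)

lemma grp_alg_delta: "g \<in> carrier G \<Longrightarrow> is_subfield K \<Longrightarrow> delta g \<in> grp_alg G K"
  by (auto simp: grp_alg_def delta_def is_subfield_def)

lemma grp_alg_mono: "a \<in> grp_alg G K \<Longrightarrow> a \<in> grp_alg G UNIV"
  by (simp add: grp_alg_def)

lemma conv_grp_alg: "conv G a b \<in> grp_alg G UNIV"
  by (simp add: grp_alg_def conv_def)

lemma conv_grp_alg_K:
  assumes K: "is_subfield K" and a: "a \<in> grp_alg G K" and b: "b \<in> grp_alg G K"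
  shows "conv G a b \<in> grp_alg G K"
proof -
  have "conv G a b x \<in> K" for x
  proof (cases "x \<in> carrier G")
    case True
    have "(\<Sum>g\<in>carrier G. a g * b (inv g \<otimes> x)) \<in> K"
      apply (rule subfield_sum[OF K])
      using a b K unfolding grp_alg_def is_subfield_def by auto
    then show ?thesis using True by (simp add: conv_def)
  next
    case False then show ?thesis using K by (simp add: conv_def is_subfield_def)
  qed
  then show ?thesis by (simp add: grp_alg_def conv_def)
qed

lemma conv_delta_left:
  assumes "g \<in> carrier G"
  shows "conv G (delta g) b = (\<lambda>x. if x \<in> carrier G then b (inv g \<otimes> x) else 0)"
proof
  fix x
  show "conv G (delta g) b x = (if x \<in> carrier G then b (inv g \<otimes> x) else 0)"
    using assms fin by (simp add: conv_def delta_def if_distrib[of "\<lambda>t. t * _"] sum.delta cong: if_cong)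
qed

lemma conv_delta_right:
  assumes "g \<in> carrier G" and a: "a \<in> grp_alg G UNIV"
  shows "conv G a (delta g) = (\<lambda>x. if x \<in> carrier G then a (x \<otimes> inv g) else 0)"
proof
  fix x
  show "conv G a (delta g) x = (if x \<in> carrier G then a (x \<otimes> inv g) else 0)"
  proof (cases "x \<in> carrier G")
    case True
    have eq: "h \<in> carrier G \<Longrightarrow> (inv h \<otimes> x = g) = (h = x \<otimes> inv g)" for h
      using True assms(1)
      by (metis inv_closed inv_inv m_closed group.inv_solve_left' grp inv_mult_group)
    have "(\<Sum>h\<in>carrier G. a h * delta g (inv h \<otimes> x)) = (\<Sum>h\<in>carrier G. if h = x \<otimes> inv g then a h else 0)"
      by (rule sum.cong) (auto simp: delta_def eq)
    also have "\<dots> = a (x \<otimes> inv g)" using fin True assms(1) by (simp add: sum.delta')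
    finally show ?thesis using True by (simp add: conv_def)
  qed (simp add: conv_def)
qed

lemma conv_delta_one_right: "a \<in> grp_alg G UNIV \<Longrightarrow> conv G a (delta \<one>) = a"
  by (rule ext) (auto simp: conv_delta_right grp_alg_def)

lemma conv_delta_one_left: "b \<in> grp_alg G UNIV \<Longrightarrow> conv G (delta \<one>) b = b"
  by (rule ext) (auto simp: conv_delta_left grp_alg_def)

lemma conv_add_left: "conv G (a + b) c = conv G a c + conv G b c"
  by (rule ext) (simp add: conv_def distrib_right sum.distrib)

lemma conv_add_right: "conv G a (b + c) = conv G a b + conv G a c"
  by (rule ext) (simp add: conv_def distrib_left sum.distrib)

lemma conv_ascale_left: "conv G (ascale t a) b = ascale t (conv G a b)"
  by (rule ext) (simp add: conv_def sum_distrib_left mult.assoc)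

lemma conv_ascale_right: "conv G a (ascale t b) = ascale t (conv G a b)"
  by (rule ext) (simp add: conv_def sum_distrib_left mult.left_commute)

lemma conv_zero_left: "conv G 0 b = 0"
  by (rule ext) (simp add: conv_def)

lemma conv_zero_right: "conv G a 0 = 0"
  by (rule ext) (simp add: conv_def)

lemma conv_sum_left: "conv G (sum f S) c = (\<Sum>i\<in>S. conv G (f i) c)"
proof
  fix x show "conv G (sum f S) c x = (\<Sum>i\<in>S. conv G (f i) c) x"
    apply (cases "x \<in> carrier G")
     apply (simp add: conv_def sumf_apply sum_distrib_right)
     apply (rule sum.swap)
    by (simp add: conv_def sumf_apply)
qed

lemma conv_sum_right: "conv G c (sum f S) = (\<Sum>i\<in>S. conv G c (f i))"
proof
  fix x show "conv G c (sum f S) x = (\<Sum>i\<in>S. conv G c (f i)) x"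
    apply (cases "x \<in> carrier G")
     apply (simp add: conv_def sumf_apply sum_distrib_left)
     apply (rule sum.swap)
    by (simp add: conv_def sumf_apply)
qed

lemma conv_assoc:
  assumes a: "a \<in> grp_alg G UNIV" and b: "b \<in> grp_alg G UNIV"
  shows "conv G (conv G a b) c = conv G a (conv G b c)"
proof
  fix x
  show "conv G (conv G a b) c x = conv G a (conv G b c) x"
  proof (cases "x \<in> carrier G")
    case x: True
    have aux: "p \<in> carrier G \<Longrightarrow> q \<in> carrier G \<Longrightarrow> p \<otimes> q \<otimes> inv q = p" for p q
      by (simp add: m_assoc)
    have "conv G (conv G a b) c x = (\<Sum>g\<in>carrier G. (\<Sum>h\<in>carrier G. a h * b (inv h \<otimes> g)) * c (inv g \<otimes> x))"
      using x by (simp add: conv_def)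
    also have "\<dots> = (\<Sum>h\<in>carrier G. \<Sum>g\<in>carrier G. a h * (b (inv h \<otimes> g) * c (inv g \<otimes> x)))"
      apply (simp add: sum_distrib_right sum_distrib_left mult.assoc)
      by (rule sum.swap)
    also have "\<dots> = (\<Sum>h\<in>carrier G. \<Sum>k\<in>carrier G. a h * (b k * c (inv k \<otimes> (inv h \<otimes> x))))"
    proof (rule sum.cong[OF refl])
      fix h assume h: "h \<in> carrier G"
      show "(\<Sum>g\<in>carrier G. a h * (b (inv h \<otimes> g) * c (inv g \<otimes> x))) =
            (\<Sum>k\<in>carrier G. a h * (b k * c (inv k \<otimes> (inv h \<otimes> x))))"
        apply (rule sum.reindex_bij_witness[where i="\<lambda>k. h \<otimes> k" and j="\<lambda>g. inv h \<otimes> g"])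
        using h x by (auto simp: m_assoc[symmetric] inv_mult_group aux)
    qed
    also have "\<dots> = conv G a (conv G b c) x"
      using x by (simp add: conv_def sum_distrib_left)
    finally show ?thesis .
  qed (simp add: conv_def)
qed

lemma grp_alg_expand:
  assumes a: "a \<in> grp_alg G UNIV"
  shows "a = (\<Sum>g\<in>carrier G. ascale (a g) (delta g))"
proof
  fix x
  have "(\<Sum>g\<in>carrier G. ascale (a g) (delta g)) x = (\<Sum>g\<in>carrier G. a g * delta g x)"
    by (simp add: sumf_apply)   
  also have "\<dots> = a x"
    using fin a by (simp add: delta_def if_distrib[of "\<lambda>t. _ * t"] sum.delta' grp_alg_def cong: if_cong)
  finally show "a x = (\<Sum>g\<in>carrier G. ascale (a g) (delta g)) x" by simp
qed

lemma conv_scalar_left: "b \<in> grp_alg G UNIV \<Longrightarrow> conv G (ascale c (delta \<one>)) b = ascale c b"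
  by (simp add: conv_ascale_left conv_delta_one_left)

lemma conv_scalar_right: "a \<in> grp_alg G UNIV \<Longrightarrow> conv G a (ascale c (delta \<one>)) = ascale c a"
  by (simp add: conv_ascale_right conv_delta_one_right)

lemma conv_delta_delta:
  assumes g: "g \<in> carrier G" and h: "h \<in> carrier G"
  shows "conv G (delta g) (delta h) = delta (g \<otimes> h)"
proof
  fix x
  have "x \<in> carrier G \<Longrightarrow> (inv g \<otimes> x = h) = (x = g \<otimes> h)"
    using g h by (auto simp: m_assoc[symmetric])
  then show "conv G (delta g) (delta h) x = delta (g \<otimes> h) x"
    unfolding conv_delta_left[OF g] using g h by (auto simp: delta_def)
qed

lemma conv_at_one: "conv G a b \<one> = (\<Sum>g\<in>carrier G. a g * b (inv g))"
  by (simp add: conv_def)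

lemma conv_delta_at_one:
  "y \<in> carrier G \<Longrightarrow> conv G (delta y) w \<one> = w (inv y)"
  by (simp add: conv_delta_left)

end


lemma subfield_neg1: "is_subfield K \<Longrightarrow> (-1::'a::field) \<in> K"
  unfolding is_subfield_def by metis

lemma subfield_neg: "is_subfield K \<Longrightarrow> x \<in> K \<Longrightarrow> (-x::'a::field) \<in> K"
  unfolding is_subfield_def by metis

context vector_space begin

lemma E_span_eq: "E_span scale S = span S"
  unfolding E_span_def span_explicit by auto

lemma K_subspace_UNIV: "K_subspace UNIV scale S \<longleftrightarrow> subspace S"
  unfolding K_subspace_def subspace_def by auto

lemma K_indep_UNIV: "K_indep UNIV scale S \<longleftrightarrow> independent S"
  unfolding K_indep_def dependent_explicit by blast

lemma K_subspace_sum: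
  assumes X: "K_subspace K scale X" and K: "is_subfield K"
    and I: "\<And>i. i \<in> I \<Longrightarrow> a i \<in> K \<and> v i \<in> X"
  shows "(\<Sum>i\<in>I. a i *s v i) \<in> X"
  using I
proof (induction I rule: infinite_finite_induct)
  case (infinite A) then show ?case using X by (simp add: K_subspace_def)
next
  case empty then show ?case using X by (simp add: K_subspace_def)
next
  case (insert x F)
  then show ?case using X by (simp add: K_subspace_def)
qed

lemma K_subspace_diff:
  assumes X: "K_subspace K scale X" and K: "is_subfield K" and "x \<in> X" "y \<in> X"
  shows "x - y \<in> X"
proof -
  from X have "\<forall>c\<in>K. \<forall>x\<in>X. c *s x \<in> X" by (simp add: K_subspace_def)
  from this[rule_format, OF subfield_neg1[OF K] \<open>y \<in> X\<close>] have "- y \<in> X" by simp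
  then have "x + - y \<in> X" using X assms by (auto simp: K_subspace_def)
  then show ?thesis by simp
qed

lemma Klin_sum:
  assumes X: "K_subspace K scale X" and K: "is_subfield K"
    and add: "\<And>x y. x \<in> X \<Longrightarrow> y \<in> X \<Longrightarrow> \<phi> (x + y) = \<phi> x + \<phi> y"
    and hom: "\<And>c x. c \<in> K \<Longrightarrow> x \<in> X \<Longrightarrow> \<phi> (c *s x) = c * \<phi> x"
    and I: "\<And>i. i \<in> I \<Longrightarrow> a i \<in> K \<and> v i \<in> X"
  shows "\<phi> (\<Sum>i\<in>I. a i *s v i) = (\<Sum>i\<in>I. a i * \<phi> (v i))"
  using I
proof (induction I rule: infinite_finite_induct)
  have z: "\<phi> 0 = 0"
  proof -
    have "0 \<in> X" using X by (simp add: K_subspace_def)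
    then have "\<phi> (0 + 0) = \<phi> 0 + \<phi> 0" using add by blast
    then show ?thesis by (metis add.right_neutral add_left_cancel)
  qed
  { case (infinite A) then show ?case using z by simp }
  { case empty then show ?case using z by simp }
next
  case (insert x F)
  have "(\<Sum>i\<in>F. a i *s v i) \<in> X" using K_subspace_sum[OF X K, of F a v] insert.prems by blast
  moreover have "a x *s v x \<in> X" using X insert by (auto simp: K_subspace_def)
  ultimately show ?case using insert add hom by simp
qed

lemma Klin_diff:
  assumes X: "K_subspace K scale X" and K: "is_subfield K"
    and add: "\<And>x y. x \<in> X \<Longrightarrow> y \<in> X \<Longrightarrow> \<phi> (x + y) = \<phi> x + \<phi> y"
    and hom: "\<And>c x. c \<in> K \<Longrightarrow> x \<in> X \<Longrightarrow> \<phi> (c *s x) = c * \<phi> x"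
    and "x \<in> X" "y \<in> X"
  shows "\<phi> (x - y) = \<phi> x - \<phi> y"
proof -
  have m: "-1 \<in> K" using subfield_neg1[OF K] .
  have "(-1) *s y \<in> X" using X m assms by (auto simp: K_subspace_def)
  then have "\<phi> (x + (-1) *s y) = \<phi> x + \<phi> ((-1) *s y)" using add assms by blast
  also have "\<phi> ((-1) *s y) = - \<phi> y" using hom[OF m \<open>y \<in> X\<close>] by simp
  finally show ?thesis by simp
qed

lemma dual_basis:
  assumes K: "is_subfield K" and X: "K_subspace K scale X" and T: "finite T"
  shows "(\<forall>t\<in>T. \<forall>x\<in>X. \<forall>y\<in>X. f t (x + y) = f t x + f t y) \<longrightarrow>
    (\<forall>t\<in>T. \<forall>c\<in>K. \<forall>x\<in>X. f t (c *s x) = c * f t x) \<longrightarrow>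
    (\<forall>t\<in>T. \<forall>x\<in>X. f t x \<in> K) \<longrightarrow>
    (\<forall>c. (\<forall>t\<in>T. c t \<in> K) \<longrightarrow> (\<forall>x\<in>X. (\<Sum>t\<in>T. c t * f t x) = 0) \<longrightarrow> (\<forall>t\<in>T. c t = 0)) \<longrightarrow>
    (\<exists>w. (\<forall>t\<in>T. w t \<in> X) \<and> (\<forall>t\<in>T. \<forall>t'\<in>T. f t' (w t) = (if t' = t then 1 else 0)))"
  using T
proof (induction T rule: finite_induct)
  case empty then show ?case by simp
next
  case (insert u T)
  show ?case
  proof (intro impI)
    assume add: "\<forall>t\<in>insert u T. \<forall>x\<in>X. \<forall>y\<in>X. f t (x + y) = f t x + f t y"
      and hom: "\<forall>t\<in>insert u T. \<forall>c\<in>K. \<forall>x\<in>X. f t (c *s x) = c * f t x"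
      and val: "\<forall>t\<in>insert u T. \<forall>x\<in>X. f t x \<in> K"
      and ind: "\<forall>c. (\<forall>t\<in>insert u T. c t \<in> K) \<longrightarrow> (\<forall>x\<in>X. (\<Sum>t\<in>insert u T. c t * f t x) = 0)
                 \<longrightarrow> (\<forall>t\<in>insert u T. c t = 0)"
    have indT: "\<forall>c. (\<forall>t\<in>T. c t \<in> K) \<longrightarrow> (\<forall>x\<in>X. (\<Sum>t\<in>T. c t * f t x) = 0) \<longrightarrow> (\<forall>t\<in>T. c t = 0)"
    proof (intro allI impI)
      fix c assume cK: "\<forall>t\<in>T. c t \<in> K" and z: "\<forall>x\<in>X. (\<Sum>t\<in>T. c t * f t x) = 0"
      let ?c = "c(u := 0)"
      have "\<forall>t\<in>insert u T. ?c t \<in> K" using cK K insert(2) by (auto simp: is_subfield_def)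
      moreover have "\<forall>x\<in>X. (\<Sum>t\<in>insert u T. ?c t * f t x) = 0"
      proof
        fix x assume "x \<in> X"
        have "(\<Sum>t\<in>insert u T. ?c t * f t x) = (\<Sum>t\<in>T. ?c t * f t x)"
          using insert(1,2) by simp
        also have "\<dots> = (\<Sum>t\<in>T. c t * f t x)"
          using insert(2) by (intro sum.cong) auto
        finally show "(\<Sum>t\<in>insert u T. ?c t * f t x) = 0" using z \<open>x \<in> X\<close> by simp
      qed
      ultimately have "\<forall>t\<in>insert u T. ?c t = 0" using ind by blast
      then show "\<forall>t\<in>T. c t = 0" using insert(2) by (metis fun_upd_other insertCI)
    qed
    obtain w where wX: "\<forall>t\<in>T. w t \<in> X"
      and wd: "\<forall>t\<in>T. \<forall>t'\<in>T. f t' (w t) = (if t' = t then 1 else 0)"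
      using insert(3) add hom val indT by auto
    define g where "g x = f u x - (\<Sum>t\<in>T. f u (w t) * f t x)" for x
    have "\<exists>x0\<in>X. g x0 \<noteq> 0"
    proof (rule ccontr)
      assume "\<not> (\<exists>x0\<in>X. g x0 \<noteq> 0)"
      then have gz: "\<forall>x\<in>X. g x = 0" by auto
      define c where "c t = (if t = u then 1 else - f u (w t))" for t
      have "\<forall>t\<in>insert u T. c t \<in> K"
        using K val wX by (auto simp: c_def is_subfield_def)
      moreover have "\<forall>x\<in>X. (\<Sum>t\<in>insert u T. c t * f t x) = 0"
      proof
        fix x assume x: "x \<in> X"
        have "(\<Sum>t\<in>insert u T. c t * f t x) = f u x + (\<Sum>t\<in>T. c t * f t x)"
          using insert(1,2) by (simp add: c_def)
        also have "(\<Sum>t\<in>T. c t * f t x) = - (\<Sum>t\<in>T. f u (w t) * f t x)"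
          using insert(2) by (auto simp: c_def sum_negf[symmetric] intro!: sum.cong)
        finally show "(\<Sum>t\<in>insert u T. c t * f t x) = 0" using gz x by (simp add: g_def)
      qed
      ultimately have "c u = 0" using ind by blast
      then show False by (simp add: c_def)
    qed
    then obtain x0 where x0: "x0 \<in> X" and gx0: "g x0 \<noteq> 0" by blast
    define b where "b = x0 - (\<Sum>t\<in>T. f t x0 *s w t)"
    have sumX: "(\<Sum>t\<in>T. f t x0 *s w t) \<in> X"
      by (rule K_subspace_sum[OF X K]) (use val x0 wX in auto)
    have bX: "b \<in> X" unfolding b_def by (rule K_subspace_diff[OF X K x0 sumX])
    have fb: "f s b = (if s = u then g x0 else 0)" if s: "s \<in> insert u T" for s
    proof -
      have ad: "\<And>x y. x \<in> X \<Longrightarrow> y \<in> X \<Longrightarrow> f s (x + y) = f s x + f s y" using add s by blast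
      have hm: "\<And>c x. c \<in> K \<Longrightarrow> x \<in> X \<Longrightarrow> f s (c *s x) = c * f s x" using hom s by blast
      have "f s b = f s x0 - f s (\<Sum>t\<in>T. f t x0 *s w t)"
        unfolding b_def by (rule Klin_diff[OF X K ad hm x0 sumX])
      also have "f s (\<Sum>t\<in>T. f t x0 *s w t) = (\<Sum>t\<in>T. f t x0 * f s (w t))"
        by (rule Klin_sum[OF X K ad hm]) (use val x0 wX in auto)
      finally have eq: "f s b = f s x0 - (\<Sum>t\<in>T. f t x0 * f s (w t))" .
      show ?thesis
      proof (cases "s = u")
        case True then show ?thesis using eq by (simp add: g_def mult.commute)
      next
        case False
        then have sT: "s \<in> T" using s by auto
        have "(\<Sum>t\<in>T. f t x0 * f s (w t)) = (\<Sum>t\<in>T. if t = s then f t x0 else 0)"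
          using wd sT by (intro sum.cong) auto
        also have "\<dots> = f s x0" using insert(1) sT by simp
        finally show ?thesis using eq False by simp
      qed
    qed
    have gK: "g x0 \<in> K" using fb[of u] val bX by auto
    define wu where "wu = (1 / g x0) *s b"
    have kinv: "1 / g x0 \<in> K" using subfield_div[OF K _ gK] K by (simp add: is_subfield_def)
    have wuX: "wu \<in> X" using X kinv bX by (simp add: wu_def K_subspace_def)
    have fwu: "f s wu = (if s = u then 1 else 0)" if s: "s \<in> insert u T" for s
      using hom s kinv bX fb[OF s] gx0 unfolding wu_def by auto
    define w' where "w' t = (if t = u then wu else w t - f u (w t) *s wu)" for t
    have "\<forall>t\<in>insert u T. w' t \<in> X"
    proof
      fix t assume t: "t \<in> insert u T"
      show "w' t \<in> X"
      proof (cases "t = u")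
        case True then show ?thesis using wuX by (simp add: w'_def)
      next
        case False
        then have tT: "t \<in> T" using t by auto
        have "f u (w t) *s wu \<in> X" using X val wX wuX tT by (auto simp: K_subspace_def)
        then show ?thesis using K_subspace_diff[OF X K] wX tT False by (simp add: w'_def)
      qed
    qed
    moreover have "\<forall>t\<in>insert u T. \<forall>t'\<in>insert u T. f t' (w' t) = (if t' = t then 1 else 0)"
    proof (intro ballI)
      fix t t' assume t: "t \<in> insert u T" and t': "t' \<in> insert u T"
      show "f t' (w' t) = (if t' = t then 1 else 0)"
      proof (cases "t = u")
        case True then show ?thesis using fwu[OF t'] by (simp add: w'_def)
      next
        case False
        then have tT: "t \<in> T" using t by auto
        have ad: "\<And>x y. x \<in> X \<Longrightarrow> y \<in> X \<Longrightarrow> f t' (x + y) = f t' x + f t' y" using add t' by blast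
        have hm: "\<And>c x. c \<in> K \<Longrightarrow> x \<in> X \<Longrightarrow> f t' (c *s x) = c * f t' x" using hom t' by blast
        have sX: "f u (w t) *s wu \<in> X" using X val wX wuX tT by (auto simp: K_subspace_def)
        have "f t' (w' t) = f t' (w t) - f t' (f u (w t) *s wu)"
          using False Klin_diff[OF X K ad hm _ sX, of "w t"] wX tT by (simp add: w'_def)
        also have "f t' (f u (w t) *s wu) = f u (w t) * f t' wu"
          using hm val wX wuX tT by auto
        finally have eq: "f t' (w' t) = f t' (w t) - f u (w t) * f t' wu" .
        show ?thesis
        proof (cases "t' = u")
          case True then show ?thesis using eq fwu[OF t'] False by simp
        next
          case False2: False
          then have "t' \<in> T" using t' by auto
          then show ?thesis using eq fwu[OF t'] False2 wd tT by simp
        qed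
      qed
    qed
    ultimately show "\<exists>w. (\<forall>t\<in>insert u T. w t \<in> X) \<and>
        (\<forall>t\<in>insert u T. \<forall>t'\<in>insert u T. f t' (w t) = (if t' = t then 1 else 0))" by blast
  qed
qed

end


lemma lin_sum_gen:
  assumes "vector_space s1" "vector_space s2" "module.subspace s1 S"
    and add: "\<And>x y. x \<in> S \<Longrightarrow> y \<in> S \<Longrightarrow> f (x + y) = f x + f y"
    and hom: "\<And>c x. x \<in> S \<Longrightarrow> f (s1 c x) = s2 c (f x)"
    and I: "I \<subseteq> S"
  shows "f (\<Sum>i\<in>I. s1 (a i) i) = (\<Sum>i\<in>I. s2 (a i) (f i))"
proof -
  interpret V1: vector_space s1 by fact
  interpret V2: vector_space s2 by fact
  have S: "V1.subspace S" by fact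
  have z: "f 0 = 0"
  proof -
    have "f (0 + 0) = f 0 + f 0" using add V1.subspace_0[OF S] by blast
    then show ?thesis by (metis add.right_neutral add_left_cancel)
  qed
  show ?thesis using I
  proof (induction I rule: infinite_finite_induct)
    case (insert x F)
    have "(\<Sum>i\<in>F. s1 (a i) i) \<in> S" using insert.prems
      by (intro V1.subspace_sum[OF S]) (auto intro: V1.subspace_scale[OF S])
    moreover have "s1 (a x) x \<in> S" using insert.prems V1.subspace_scale[OF S] by auto
    ultimately show ?case using insert add hom by simp
  qed (use z in auto)
qed

lemma lin_span_image:
  assumes vs1: "vector_space s1" and vs2: "vector_space s2" and S: "module.subspace s1 S"
    and add: "\<And>x y. x \<in> S \<Longrightarrow> y \<in> S \<Longrightarrow> f (x + y) = f x + f y"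
    and hom: "\<And>c x. x \<in> S \<Longrightarrow> f (s1 c x) = s2 c (f x)"
    and BS: "B \<subseteq> S" and x: "x \<in> module.span s1 B"
  shows "f x \<in> module.span s2 (f ` B)"
proof -
  have "x \<in> {\<Sum>a\<in>t. s1 (r a) a | t r. finite t \<and> t \<subseteq> B}"
    using x vs1 by (simp only: module.span_explicit module_iff_vector_space)
  then obtain t r where t: "finite t" "t \<subseteq> B" "x = (\<Sum>a\<in>t. s1 (r a) a)"
    by blast
  have tS: "t \<subseteq> S" using t BS by auto
  interpret V2: vector_space s2 by fact
  have "f (\<Sum>a\<in>t. s1 (r a) a) = (\<Sum>a\<in>t. s2 (r a) (f a))"
    by (rule lin_sum_gen[where f=f, OF vs1 vs2 S add hom tS])
  also have "\<dots> \<in> V2.span (f ` B)"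
    using t by (intro V2.span_sum V2.span_scale V2.span_base) auto
  finally show ?thesis using t(3) by simp
qed

lemma dim_iso:
  assumes vs1: "vector_space s1" and vs2: "vector_space s2" and S: "module.subspace s1 S"
    and add: "\<And>x y. x \<in> S \<Longrightarrow> y \<in> S \<Longrightarrow> f (x + y) = f x + f y"
    and hom: "\<And>c x. x \<in> S \<Longrightarrow> f (s1 c x) = s2 c (f x)"
    and inj: "inj_on f S"
  shows "vector_space.dim s2 (f ` S) = vector_space.dim s1 S"
proof -
  interpret V1: vector_space s1 by fact
  interpret V2: vector_space s2 by fact
  have z: "f 0 = 0"
  proof -
    have "f (0 + 0) = f 0 + f 0" using add V1.subspace_0[OF S] by blast
    then show ?thesis by (metis add.right_neutral add_left_cancel)
  qed
  obtain B where BS: "B \<subseteq> S" and Bi: "V1.independent B" and SB: "S \<subseteq> V1.span B"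
    and cB: "card B = V1.dim S" by (rule V1.basis_exists)
  have sp: "f ` S \<subseteq> V2.span (f ` B)"
    using lin_span_image[where f=f, OF vs1 vs2 S add hom BS] SB by blast
  have ind: "V2.independent (f ` B)"
  proof
    assume "V2.dependent (f ` B)"
    then obtain t u where t: "finite t" "t \<subseteq> f ` B" "(\<Sum>v\<in>t. s2 (u v) v) = 0" "\<exists>v\<in>t. u v \<noteq> 0"
      unfolding V2.dependent_explicit by blast
    obtain t' where t': "t' \<subseteq> B" "t = f ` t'" "inj_on f t'"
      using subset_image_inj[THEN iffD1, OF t(2)] by blast
    have ft': "finite t'" using t(1) t' finite_image_iff by blast
    have "(\<Sum>v\<in>t'. s2 (u (f v)) (f v)) = 0"
      using t(3) t' by (simp add: sum.reindex)
    moreover have "f (\<Sum>v\<in>t'. s1 (u (f v)) v) = (\<Sum>v\<in>t'. s2 (u (f v)) (f v))"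
      using lin_sum_gen[where f=f, OF vs1 vs2 S add hom, of t' "\<lambda>v. u (f v)"] t' BS by auto
    ultimately have "f (\<Sum>v\<in>t'. s1 (u (f v)) v) = f 0" using z by simp
    moreover have "(\<Sum>v\<in>t'. s1 (u (f v)) v) \<in> S"
      using t' BS by (intro V1.subspace_sum[OF S] V1.subspace_scale[OF S]) auto
    ultimately have "(\<Sum>v\<in>t'. s1 (u (f v)) v) = 0"
      by (rule inj_onD[OF inj]) (rule V1.subspace_0[OF S])
    then have "\<forall>v\<in>t'. u (f v) = 0"
      using V1.independentD[OF Bi ft' t'(1), of "\<lambda>v. u (f v)"] by blast
    then show False using t(4) t'(2) by auto
  qed
  have "card (f ` B) = card B" using card_image[OF inj_on_subset[OF inj BS]] .
  moreover have "card (f ` B) = V2.dim (f ` S)"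
    by (rule V2.basis_card_eq_dim[of "f ` B" "f ` S"]) (use BS sp ind in auto)
  ultimately show ?thesis using cB by simp
qed

context vector_space begin

lemma indep_card_le_dim:
  assumes W: "subspace W" and B0: "finite B0" "W \<subseteq> span B0"
    and I: "I \<subseteq> W" "independent I"
  shows "finite I \<and> card I \<le> dim W"
proof -
  obtain Bw where Bw: "Bw \<subseteq> W" "independent Bw" "W \<subseteq> span Bw" "card Bw = dim W"
    by (rule basis_exists)
  have fBw: "finite Bw" using independent_span_bound[OF B0(1) Bw(2)] Bw(1) B0(2) by auto
  have "I \<subseteq> span Bw" using I(1) Bw(3) by auto
  from independent_span_bound[OF fBw I(2) this] Bw(4) show ?thesis by simp
qed

lemma finite_basis_of:
  assumes B0: "finite B0" "W \<subseteq> span B0" and "B \<subseteq> W" "independent B"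
  shows "finite B"
  using independent_span_bound[OF B0(1) assms(4)] assms by auto

lemma rank_half:
  fixes b :: "'b \<Rightarrow> 'b \<Rightarrow> 'a"
  assumes U: "subspace U" and W: "subspace W"
    and B0: "finite B0" "U \<subseteq> span B0" "W \<subseteq> span B0"
    and badd1: "\<And>u u' w. b (u + u') w = b u w + b u' w"
    and bsc1: "\<And>c u w. b (c *s u) w = c * b u w"
    and badd2: "\<And>u w w'. b u (w + w') = b u w + b u w'"
    and bsc2: "\<And>c u w. b u (c *s w) = c * b u w"
  shows "dim U + dim {w\<in>W. \<forall>u\<in>U. b u w = 0} \<le> dim W + dim {u\<in>U. \<forall>w\<in>W. b u w = 0}"
proof -
  define kU where "kU = {u\<in>U. \<forall>w\<in>W. b u w = 0}"
  define kW where "kW = {w\<in>W. \<forall>u\<in>U. b u w = 0}"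
  have XU: "K_subspace UNIV scale UNIV" by (simp add: K_subspace_def)
  have lin1: "b (\<Sum>i\<in>I. a i *s v i) w = (\<Sum>i\<in>I. a i * b (v i) w)" for I a v w
    by (rule Klin_sum[OF XU subfield_UNIV, where \<phi>="\<lambda>u. b u w"]) (auto simp: badd1 bsc1)
  have lin2: "b u (\<Sum>i\<in>I. a i *s v i) = (\<Sum>i\<in>I. a i * b u (v i))" for I a v u
    by (rule Klin_sum[OF XU subfield_UNIV, where \<phi>="\<lambda>w. b u w"]) (auto simp: badd2 bsc2)
  have b02: "b u 0 = 0" for u using badd2[of u 0 0] by (metis add.right_neutral add_left_cancel)
  have kUsub: "kU \<subseteq> U" by (auto simp: kU_def)
  have kWsub: "kW \<subseteq> W" by (auto simp: kW_def)
  obtain S0 where S0: "S0 \<subseteq> kU" "independent S0" "kU \<subseteq> span S0" "card S0 = dim kU"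
    by (rule basis_exists)
  obtain B where B: "S0 \<subseteq> B" "B \<subseteq> U" "independent B" "U \<subseteq> span B"
    using maximal_independent_subset_extend[of S0 U] S0 kUsub by blast
  have finB: "finite B" using finite_basis_of[OF B0(1,2) B(2,3)] .
  have cB: "card B = dim U" using basis_card_eq_dim[OF B(2,4,3)] .
  define T where "T = B - S0"
  have finT: "finite T" using finB by (simp add: T_def)
  have finS0: "finite S0" using finB B(1) finite_subset by blast
  have cT: "card T + card S0 = card B"
    using card_Diff_subset[OF finS0 B(1)] card_mono[OF finB B(1)] by (simp add: T_def)
  have TU: "T \<subseteq> U" using B(2) by (auto simp: T_def)
  have XW: "K_subspace UNIV scale W" using W by (simp add: K_subspace_UNIV)
  have indep: "\<forall>c. (\<forall>t\<in>T. c t \<in> (UNIV::'a set)) \<longrightarrow> (\<forall>x\<in>W. (\<Sum>t\<in>T. c t * b t x) = 0) \<longrightarrow> (\<forall>t\<in>T. c t = 0)"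
  proof (intro allI impI ballI)
    fix c t assume "\<forall>t\<in>T. c t \<in> (UNIV::'a set)" and z: "\<forall>x\<in>W. (\<Sum>t\<in>T. c t * b t x) = 0" and t: "t \<in> T"
    define u where "u = (\<Sum>t\<in>T. c t *s t)"
    have "u \<in> U" unfolding u_def using TU by (intro subspace_sum[OF U] subspace_scale[OF U]) auto
    moreover have "\<forall>w\<in>W. b u w = 0" using z by (simp add: u_def lin1)
    ultimately have "u \<in> span S0" using S0(3) by (auto simp: kU_def)
    then obtain d where d: "u = (\<Sum>v\<in>S0. d v *s v)" using span_finite[OF finS0] by auto
    define e where "e v = (if v \<in> T then c v else - d v)" for v
    have BTS: "B = T \<union> S0" "T \<inter> S0 = {}" using B(1) by (auto simp: T_def)
    have "(\<Sum>v\<in>B. e v *s v) = (\<Sum>v\<in>T. e v *s v) + (\<Sum>v\<in>S0. e v *s v)"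
      unfolding BTS(1) by (rule sum.union_disjoint) (use finT finS0 BTS(2) in auto)
    also have "(\<Sum>v\<in>T. e v *s v) = u" unfolding u_def by (intro sum.cong) (auto simp: e_def)
    also have "(\<Sum>v\<in>S0. e v *s v) = - u" unfolding d
      using BTS(2) by (auto simp: e_def sum_negf[symmetric] intro!: sum.cong)
    finally have "(\<Sum>v\<in>B. e v *s v) = 0" by simp
    then have "e t = 0" using independentD[OF B(3) finB subset_refl] t BTS by blast
    then show "c t = 0" using t by (simp add: e_def)
  qed
  have "\<exists>w. (\<forall>t\<in>T. w t \<in> W) \<and> (\<forall>t\<in>T. \<forall>t'\<in>T. b t' (w t) = (if t' = t then 1 else 0))"
    using dual_basis[OF subfield_UNIV XW finT, of b] badd2 bsc2 indep by blast
  then obtain w where wW: "\<forall>t\<in>T. w t \<in> W"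
    and wd: "\<forall>t\<in>T. \<forall>t'\<in>T. b t' (w t) = (if t' = t then 1 else 0)" by blast
  have kWs: "subspace kW"
    unfolding kW_def subspace_def using W
    by (auto simp: subspace_def badd2 bsc2 b02)
  obtain S1 where S1: "S1 \<subseteq> kW" "independent S1" "kW \<subseteq> span S1" "card S1 = dim kW"
    by (rule basis_exists)
  have finS1: "finite S1" using finite_basis_of[OF B0(1) _ _ S1(2)] S1(1) kWsub B0(3) by blast
  have injw: "inj_on w T"
  proof
    fix t t' assume "t \<in> T" "t' \<in> T" "w t = w t'"
    then show "t = t'" using wd by (metis zero_neq_one)
  qed
  have disj: "w ` T \<inter> S1 = {}"
  proof -
    { fix t assume t: "t \<in> T" "w t \<in> S1"
      then have "b t (w t) = 0" using S1(1) TU by (auto simp: kW_def)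
      moreover have "b t (w t) = 1" using wd t by auto
      ultimately have False by simp }
    then show ?thesis by auto
  qed
  define A where "A = w ` T \<union> S1"
  have finA: "finite A" using finT finS1 by (simp add: A_def)
  have AW: "A \<subseteq> W" using wW S1(1) kWsub by (auto simp: A_def)
  have indA: "independent A"
  proof (rule independent_if_scalars_zero[OF finA])
    fix f x assume sz: "(\<Sum>x\<in>A. f x *s x) = 0" and xA: "x \<in> A"
    have split: "(\<Sum>x\<in>A. g x) = (\<Sum>x\<in>w ` T. g x) + (\<Sum>x\<in>S1. g x)" for g :: "'b \<Rightarrow> 'c::comm_monoid_add"
      unfolding A_def by (rule sum.union_disjoint) (use finT finS1 disj in auto)
    have fw: "f (w t) = 0" if t: "t \<in> T" for t
    proof -
      have "0 = b t (\<Sum>x\<in>A. f x *s x)" using sz b02 by simp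
      also have "\<dots> = (\<Sum>x\<in>A. f x * b t x)" by (rule lin2)
      also have "\<dots> = (\<Sum>x\<in>w ` T. f x * b t x) + (\<Sum>x\<in>S1. f x * b t x)" by (rule split)
      also have "(\<Sum>x\<in>S1. f x * b t x) = 0"
        using S1(1) TU t by (intro sum.neutral) (auto simp: kW_def)
      also have "(\<Sum>x\<in>w ` T. f x * b t x) = (\<Sum>t'\<in>T. f (w t') * b t (w t'))"
        by (rule sum.reindex[OF injw, unfolded comp_def])
      also have "\<dots> = (\<Sum>t'\<in>T. if t' = t then f (w t) else 0)"
        using wd t by (intro sum.cong) auto
      also have "\<dots> = f (w t)" using finT t by simp
      finally show ?thesis by simp
    qed
    have "(\<Sum>x\<in>w ` T. f x *s x) = 0" using fw by (auto intro!: sum.neutral)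
    moreover have "(\<Sum>x\<in>A. f x *s x) = (\<Sum>x\<in>w ` T. f x *s x) + (\<Sum>x\<in>S1. f x *s x)"
      unfolding A_def by (rule sum.union_disjoint) (use finT finS1 disj in auto)
    ultimately have "(\<Sum>x\<in>S1. f x *s x) = 0" using sz by simp
    then have "\<forall>x\<in>S1. f x = 0" using independentD[OF S1(2) finS1 subset_refl] by blast
    then show "f x = 0" using xA fw by (auto simp: A_def)
  qed
  have cA: "card A = card T + card S1"
    unfolding A_def using card_Un_disjoint[OF _ finS1 disj] finT card_image[OF injw] by simp
  have "card A \<le> dim W" using indep_card_le_dim[OF W B0(1,3) AW indA] by simp
  then show ?thesis using cA cT cB S0(4) S1(4) unfolding kU_def kW_def by linarith
qed

lemma rank_eq:
  fixes b :: "'b \<Rightarrow> 'b \<Rightarrow> 'a"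
  assumes U: "subspace U" and W: "subspace W"
    and B0: "finite B0" "U \<subseteq> span B0" "W \<subseteq> span B0"
    and badd1: "\<And>u u' w. b (u + u') w = b u w + b u' w"
    and bsc1: "\<And>c u w. b (c *s u) w = c * b u w"
    and badd2: "\<And>u w w'. b u (w + w') = b u w + b u w'"
    and bsc2: "\<And>c u w. b u (c *s w) = c * b u w"
  shows "dim U + dim {w\<in>W. \<forall>u\<in>U. b u w = 0} = dim W + dim {u\<in>U. \<forall>w\<in>W. b u w = 0}"
proof -
  have 1: "dim U + dim {w\<in>W. \<forall>u\<in>U. b u w = 0} \<le> dim W + dim {u\<in>U. \<forall>w\<in>W. b u w = 0}"
    by (rule rank_half[OF U W B0 badd1 bsc1 badd2 bsc2])
  have 2: "dim W + dim {u\<in>U. \<forall>w\<in>W. (\<lambda>x y. b y x) w u = 0} \<le> dim U + dim {w\<in>W. \<forall>u\<in>U. (\<lambda>x y. b y x) w u = 0}"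
    by (rule rank_half[OF W U B0(1,3,2)]) (auto simp: badd1 bsc1 badd2 bsc2)
  from 1 2 show ?thesis by simp
qed

end


locale ctx =
  fixes G :: "('g, 'b) monoid_scheme" (structure)
    and sc :: "'e::field \<Rightarrow> 'y::ab_group_add \<Rightarrow> 'y"
    and lm :: "('g \<Rightarrow> 'e) \<Rightarrow> 'y \<Rightarrow> 'y"
    and Y :: "'y set"
  assumes grp: "group G" and fin: "finite (carrier G)" and vs: "vector_space sc"
    and modY: "left_module G UNIV sc lm Y"
begin

sublocale Yv: vector_space sc by (rule vs)
sublocale La: vector_space "ascale :: 'e \<Rightarrow> ('g \<Rightarrow> 'e) \<Rightarrow> _" by (rule vs_ascale)

lemmas conv_assoc' = conv_assoc[OF grp fin]
lemmas conv_delta_one_right' = conv_delta_one_right[OF grp fin]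
lemmas conv_delta_one_left' = conv_delta_one_left[OF grp fin]
lemmas conv_scalar_left' = conv_scalar_left[OF grp fin]
lemmas conv_scalar_right' = conv_scalar_right[OF grp fin]
lemmas conv_add_left' = conv_add_left[OF grp fin]
lemmas conv_add_right' = conv_add_right[OF grp fin]
lemmas conv_ascale_left' = conv_ascale_left[OF grp fin]
lemmas conv_ascale_right' = conv_ascale_right[OF grp fin]
lemmas conv_zero_left' = conv_zero_left[OF grp fin]
lemmas conv_zero_right' = conv_zero_right[OF grp fin]
lemmas conv_sum_left' = conv_sum_left[OF grp fin]
lemmas conv_sum_right' = conv_sum_right[OF grp fin]
lemmas conv_delta_left' = conv_delta_left[OF grp fin]
lemmas conv_delta_delta' = conv_delta_delta[OF grp fin]
lemmas grp_alg_expand' = grp_alg_expand[OF grp fin]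
lemmas conv_grp_alg' = conv_grp_alg[OF grp fin]
lemmas conv_grp_alg_K' = conv_grp_alg_K[OF grp fin]
lemmas grp_alg_delta' = grp_alg_delta[OF grp fin]
lemmas conv_delta_at_one' = conv_delta_at_one[OF grp fin]

lemma one_in: "\<one> \<in> carrier G" using grp by (simp add: group.is_monoid monoid.one_closed)

lemma delta1_L: "delta \<one> \<in> grp_alg G UNIV"
  by (rule grp_alg_delta'[OF one_in subfield_UNIV])

lemma scal_L: "ascale c (delta \<one>) \<in> grp_alg G UNIV"
  using delta1_L by (auto simp: grp_alg_def)

lemma Y_sub: "Yv.subspace Y"
  using modY by (simp add: left_module_def Yv.K_subspace_UNIV)

lemma lm_in: "a \<in> grp_alg G UNIV \<Longrightarrow> y \<in> Y \<Longrightarrow> lm a y \<in> Y"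
  using modY by (simp add: left_module_def)

lemma lm_add_right: "a \<in> grp_alg G UNIV \<Longrightarrow> y \<in> Y \<Longrightarrow> z \<in> Y \<Longrightarrow> lm a (y + z) = lm a y + lm a z"
  using modY by (simp add: left_module_def)

lemma lm_add_left: "a \<in> grp_alg G UNIV \<Longrightarrow> b \<in> grp_alg G UNIV \<Longrightarrow> y \<in> Y \<Longrightarrow> lm (a + b) y = lm a y + lm b y"
  using modY by (simp add: left_module_def)

lemma lm_conv: "a \<in> grp_alg G UNIV \<Longrightarrow> b \<in> grp_alg G UNIV \<Longrightarrow> y \<in> Y \<Longrightarrow> lm (conv G a b) y = lm a (lm b y)"
  using modY by (simp add: left_module_def)

lemma lm_scalar: "y \<in> Y \<Longrightarrow> lm (ascale c (delta \<one>)) y = sc c y"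
  using modY by (simp add: left_module_def)

lemma lm_ascale: "a \<in> grp_alg G UNIV \<Longrightarrow> y \<in> Y \<Longrightarrow> lm (ascale c a) y = sc c (lm a y)"
  by (metis conv_scalar_left' lm_conv lm_in lm_scalar scal_L)

lemma lm_sc: "a \<in> grp_alg G UNIV \<Longrightarrow> y \<in> Y \<Longrightarrow> lm a (sc c y) = sc c (lm a y)"
  by (metis conv_scalar_right' lm_ascale lm_conv lm_scalar scal_L)

lemma ascale_one: "ascale 1 a = a" by (simp add: ascale_def)

lemma lm_one: "y \<in> Y \<Longrightarrow> lm (delta \<one>) y = y"
  using lm_scalar[of y 1] by (simp add: ascale_one)

lemma lm_zero_right: "a \<in> grp_alg G UNIV \<Longrightarrow> lm a 0 = 0"
  using lm_add_right[of a 0 0] Yv.subspace_0[OF Y_sub] by simp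

lemma lm_zero_left: "y \<in> Y \<Longrightarrow> lm 0 y = 0"
  using lm_add_left[of 0 0 y] grp_alg_zero[OF grp fin] by simp

lemma lm_sum_left: "(\<And>i. i \<in> S \<Longrightarrow> f i \<in> grp_alg G UNIV) \<Longrightarrow> y \<in> Y \<Longrightarrow>
    lm (sum f S) y = (\<Sum>i\<in>S. lm (f i) y)"
proof (induction S rule: infinite_finite_induct)
  case (insert x F)
  have "sum f F \<in> grp_alg G UNIV" using insert.prems by (intro grp_alg_sum[OF grp fin]) auto
  have "lm (sum f (insert x F)) y = lm (f x + sum f F) y" by (simp only: sum.insert[OF insert(1,2)])
  also have "\<dots> = lm (f x) y + lm (sum f F) y"
    by (rule lm_add_left) (use insert.prems \<open>sum f F \<in> grp_alg G UNIV\<close> in auto)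
  also have "\<dots> = lm (f x) y + (\<Sum>i\<in>F. lm (f i) y)" using insert by simp
  finally show ?case by (simp only: sum.insert[OF insert(1,2)])
qed (auto simp: lm_zero_left)

definition Kset :: "('g \<Rightarrow> 'e) set \<Rightarrow> 'y set \<Rightarrow> 'y set" where
  "Kset M Z = {z\<in>Z. \<forall>m\<in>M. lm m z = 0}"

lemma hom_dim:
  assumes M: "M \<subseteq> grp_alg G UNIV" and Z: "Yv.subspace Z" "Z \<subseteq> Y"
  shows "Hdim sc (HomG G M lm Y Z) = Yv.dim (Kset M Z)"
proof -
  let ?s1 = "\<lambda>c (\<phi>::('g \<Rightarrow> 'e) \<Rightarrow> 'y) x. sc c (\<phi> x)"
  have vs1: "vector_space ?s1" by (rule vs_fun[OF vs])
  interpret F1: vector_space ?s1 by (rule vs1)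
  let ?H = "HomG G M lm Y Z"
  have Hsub: "F1.subspace ?H"
  proof (rule F1.subspaceI)
    show "0 \<in> ?H"
      using Yv.subspace_0[OF Y_sub] Yv.subspace_0[OF Z(1)]
      by (simp add: HomG_def lm_zero_right)
  next
    fix \<phi> \<psi> assume p: "\<phi> \<in> ?H" and q: "\<psi> \<in> ?H"
    show "\<phi> + \<psi> \<in> ?H"
      using p q unfolding HomG_def
      by (auto simp: Yv.subspace_add[OF Y_sub] Yv.subspace_add[OF Z(1)] lm_add_right)
  next
    fix c \<phi> assume p: "\<phi> \<in> ?H"
    show "?s1 c \<phi> \<in> ?H"
      using p unfolding HomG_def
      by (auto simp: Yv.subspace_scale[OF Y_sub] Yv.subspace_scale[OF Z(1)] lm_sc
          Yv.scale_right_distrib)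
  qed
  let ?f = "\<lambda>\<phi>::('g \<Rightarrow> 'e) \<Rightarrow> 'y. \<phi> (delta \<one>)"
  have rep: "\<phi> x = (if x \<in> grp_alg G UNIV then lm x (\<phi> (delta \<one>)) else 0)" if p: "\<phi> \<in> ?H" for \<phi> x
  proof (cases "x \<in> grp_alg G UNIV")
    case True
    have "\<phi> x = \<phi> (conv G x (delta \<one>))" using True by (simp add: conv_delta_one_right')
    also have "\<dots> = lm x (\<phi> (delta \<one>))" using p True delta1_L unfolding HomG_def by blast
    finally show ?thesis using True by simp
  next
    case False then show ?thesis using p by (simp add: HomG_def)
  qed
  have inj: "inj_on ?f ?H"
  proof
    fix \<phi> \<psi> assume "\<phi> \<in> ?H" "\<psi> \<in> ?H" "?f \<phi> = ?f \<psi>"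
    then show "\<phi> = \<psi>" using rep by (metis ext)
  qed
  have img: "?f ` ?H = Kset M Z"
  proof
    show "?f ` ?H \<subseteq> Kset M Z"
    proof
      fix z assume "z \<in> ?f ` ?H"
      then obtain \<phi> where p: "\<phi> \<in> ?H" and z: "z = \<phi> (delta \<one>)" by auto
      have "z \<in> Z" using p z by (simp add: HomG_def)
      moreover have "lm m z = 0" if m: "m \<in> M" for m
      proof -
        have "lm m z = \<phi> m" using rep[OF p, of m] m M z by auto
        then show ?thesis using p m by (simp add: HomG_def)
      qed
      ultimately show "z \<in> Kset M Z" by (simp add: Kset_def)
    qed
  next
    show "Kset M Z \<subseteq> ?f ` ?H"
    proof
      fix z assume z: "z \<in> Kset M Z"
      then have zZ: "z \<in> Z" and zY: "z \<in> Y" and zM: "\<forall>m\<in>M. lm m z = 0" using Z by (auto simp: Kset_def)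
      define \<psi> where "\<psi> x = (if x \<in> grp_alg G UNIV then lm x z else 0)" for x
      have "\<psi> \<in> ?H"
        unfolding HomG_def
        using zY zZ zM M delta1_L
        by (auto simp: \<psi>_def lm_in lm_add_left grp_alg_add[OF grp fin] conv_grp_alg' lm_conv lm_one)
      moreover have "?f \<psi> = z" using delta1_L zY by (auto simp: \<psi>_def lm_one)
      ultimately show "z \<in> ?f ` ?H" by (metis image_eqI)
    qed
  qed
  have "Yv.dim (?f ` ?H) = F1.dim ?H"
    by (rule dim_iso[OF vs1 vs Hsub]) (use inj in auto)
  then show ?thesis using img by simp
qed

end


lemma lin_zero:
  fixes f :: "'b::ab_group_add \<Rightarrow> 'c::ab_group_add"
  assumes "vector_space s1" "module.subspace s1 S"
    and add: "\<And>x y. x \<in> S \<Longrightarrow> y \<in> S \<Longrightarrow> f (x + y) = f x + f y"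
  shows "f 0 = 0"
proof -
  interpret V1: vector_space s1 by fact
  have "f (0 + 0) = f 0 + f 0" using add V1.subspace_0[OF assms(2)] by blast
  then show ?thesis by (metis add.right_neutral add_left_cancel)
qed

lemma lin_diff:
  fixes f :: "'b::ab_group_add \<Rightarrow> 'c::ab_group_add"
  assumes "vector_space s1" "module.subspace s1 S"
    and add: "\<And>x y. x \<in> S \<Longrightarrow> y \<in> S \<Longrightarrow> f (x + y) = f x + f y"
    and "x \<in> S" "y \<in> S"
  shows "f (x - y) = f x - f y"
proof -
  interpret V1: vector_space s1 by fact
  have "x - y \<in> S" using V1.subspace_diff[OF assms(2,4,5)] .
  then have "f (x - y + y) = f (x - y) + f y" using add assms(5) by blast
  then show ?thesis by simp
qed

lemma indep_image:
  assumes vs1: "vector_space s1" and vs2: "vector_space s2" and S: "module.subspace s1 S"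
    and add: "\<And>x y. x \<in> S \<Longrightarrow> y \<in> S \<Longrightarrow> f (x + y) = f x + f y"
    and hom: "\<And>c x. x \<in> S \<Longrightarrow> f (s1 c x) = s2 c (f x)"
    and inj: "inj_on f S" and BS: "B \<subseteq> S" and Bi: "module.independent s1 B"
  shows "module.independent s2 (f ` B)"
proof -
  interpret V1: vector_space s1 by fact
  interpret V2: vector_space s2 by fact
  have z: "f 0 = 0" by (rule lin_zero[OF vs1 S add])
  show ?thesis
  proof
    assume "V2.dependent (f ` B)"
    then obtain t u where t: "finite t" "t \<subseteq> f ` B" "(\<Sum>v\<in>t. s2 (u v) v) = 0" "\<exists>v\<in>t. u v \<noteq> 0"
      unfolding V2.dependent_explicit by blast
    obtain t' where t': "t' \<subseteq> B" "t = f ` t'" "inj_on f t'"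
      using subset_image_inj[THEN iffD1, OF t(2)] by blast
    have ft': "finite t'" using t(1) t' finite_image_iff by blast
    have "(\<Sum>v\<in>t'. s2 (u (f v)) (f v)) = 0"
      using t(3) t' by (simp add: sum.reindex)
    moreover have "f (\<Sum>v\<in>t'. s1 (u (f v)) v) = (\<Sum>v\<in>t'. s2 (u (f v)) (f v))"
      using lin_sum_gen[where f=f, OF vs1 vs2 S add hom, of t' "\<lambda>v. u (f v)"] t' BS by auto
    ultimately have "f (\<Sum>v\<in>t'. s1 (u (f v)) v) = f 0" using z by simp
    moreover have "(\<Sum>v\<in>t'. s1 (u (f v)) v) \<in> S"
      using t' BS by (intro V1.subspace_sum[OF S] V1.subspace_scale[OF S]) auto
    ultimately have "(\<Sum>v\<in>t'. s1 (u (f v)) v) = 0"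
      by (rule inj_onD[OF inj]) (rule V1.subspace_0[OF S])
    then have "\<forall>v\<in>t'. u (f v) = 0"
      using V1.independentD[OF Bi ft' t'(1), of "\<lambda>v. u (f v)"] by blast
    then show False using t(4) t'(2) by auto
  qed
qed

lemma eigen_indep:
  assumes vs1: "vector_space s1" and vs2: "vector_space s2" and S: "module.subspace s1 S"
    and addC: "\<And>x y. x \<in> S \<Longrightarrow> y \<in> S \<Longrightarrow> C (x + y) = C x + C y"
    and homC: "\<And>c x. x \<in> S \<Longrightarrow> C (s1 c x) = s2 c (C x)"
    and addQ: "\<And>x y. x \<in> S \<Longrightarrow> y \<in> S \<Longrightarrow> Q (x + y) = Q x + Q y"
    and homQ: "\<And>c x. x \<in> S \<Longrightarrow> Q (s1 c x) = s2 c (Q x)"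
    and injC: "inj_on C S"
    and T: "finite T" "T \<subseteq> S" "0 \<notin> T" "inj_on \<mu> T" "\<And>v. v \<in> T \<Longrightarrow> Q v = s2 (\<mu> v) (C v)"
  shows "\<forall>u. (\<Sum>v\<in>T. s1 (u v) v) = 0 \<longrightarrow> (\<forall>v\<in>T. u v = 0)"
  using T
proof (induction T rule: finite_induct)
  case empty then show ?case by simp
next
  case (insert k T)
  interpret V1: vector_space s1 by fact
  interpret V2: vector_space s2 by fact
  have zC: "C 0 = 0" by (rule lin_zero[OF vs1 S addC])
  have kS: "k \<in> S" and TS: "T \<subseteq> S" and k0: "k \<noteq> 0" using insert.prems by auto
  have muT: "inj_on \<mu> T" using insert.prems(3) by (simp add: inj_on_insert)
  have mu_ne: "\<mu> v \<noteq> \<mu> k" if "v \<in> T" for v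
    using insert.prems(3) that insert.hyps(2) by (auto simp: inj_on_def)
  have IH: "\<forall>u. (\<Sum>v\<in>T. s1 (u v) v) = 0 \<longrightarrow> (\<forall>v\<in>T. u v = 0)"
    using insert.IH insert.prems muT by auto
  show ?case
  proof (intro allI impI ballI)
    fix u v assume sz: "(\<Sum>v\<in>insert k T. s1 (u v) v) = 0" and v: "v \<in> insert k T"
    have sz': "(\<Sum>v\<in>T. s1 (u v) v) + s1 (u k) k = 0" using sz insert.hyps by (simp add: add.commute)
    have linC: "C (\<Sum>v\<in>I. s1 (a v) v) = (\<Sum>v\<in>I. s2 (a v) (C v))" if "I \<subseteq> S" for I a
      by (rule lin_sum_gen[where f=C, OF vs1 vs2 S addC homC that])
    have linQ: "Q (\<Sum>v\<in>I. s1 (a v) v) = (\<Sum>v\<in>I. s2 (a v) (Q v))" if "I \<subseteq> S" for I a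
      by (rule lin_sum_gen[where f=Q, OF vs1 vs2 S addQ homQ that])
    have sIS: "(\<Sum>v\<in>I. s1 (a v) v) \<in> S" if "I \<subseteq> S" for I a
      using that by (intro V1.subspace_sum[OF S] V1.subspace_scale[OF S]) auto
    have e1: "(\<Sum>v\<in>T. s2 (u v) (C v)) + s2 (u k) (C k) = 0"
    proof -
      have "C ((\<Sum>v\<in>T. s1 (u v) v) + s1 (u k) k) = C 0" using sz' by simp
      then show ?thesis using addC[OF sIS[OF TS] V1.subspace_scale[OF S kS]] homC[OF kS] linC[OF TS] zC by simp
    qed
    have zQ: "Q 0 = 0" by (rule lin_zero[OF vs1 S addQ])
    have e2: "(\<Sum>v\<in>T. s2 (u v * \<mu> v) (C v)) + s2 (u k * \<mu> k) (C k) = 0"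
    proof -
      have "Q ((\<Sum>v\<in>T. s1 (u v) v) + s1 (u k) k) = Q 0" using sz' by simp
      then have "(\<Sum>v\<in>T. s2 (u v) (Q v)) + s2 (u k) (Q k) = 0"
        using addQ[OF sIS[OF TS] V1.subspace_scale[OF S kS]] homQ[OF kS] linQ[OF TS] zQ by simp
      moreover have "(\<Sum>v\<in>T. s2 (u v) (Q v)) = (\<Sum>v\<in>T. s2 (u v * \<mu> v) (C v))"
        using insert.prems(4) by (intro sum.cong) auto
      moreover have "s2 (u k) (Q k) = s2 (u k * \<mu> k) (C k)" using insert.prems(4) by simp
      ultimately show ?thesis by simp
    qed
    have "(\<Sum>v\<in>T. s2 (u v * (\<mu> v - \<mu> k)) (C v)) =
          (\<Sum>v\<in>T. s2 (u v * \<mu> v) (C v)) - s2 (\<mu> k) (\<Sum>v\<in>T. s2 (u v) (C v))"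
      by (simp add: V2.scale_sum_right sum_subtractf[symmetric] algebra_simps V2.scale_left_diff_distrib)
    also have "\<dots> = 0"
    proof -
      have a: "(\<Sum>v\<in>T. s2 (u v * \<mu> v) (C v)) = - s2 (u k * \<mu> k) (C k)"
        using e2 by (simp add: eq_neg_iff_add_eq_0)
      have b: "(\<Sum>v\<in>T. s2 (u v) (C v)) = - s2 (u k) (C k)"
        using e1 by (simp add: eq_neg_iff_add_eq_0)
      show ?thesis unfolding a b by (simp add: mult.commute)
    qed
    finally have "C (\<Sum>v\<in>T. s1 (u v * (\<mu> v - \<mu> k)) v) = C 0"
      using linC[OF TS] zC by simp
    then have "(\<Sum>v\<in>T. s1 (u v * (\<mu> v - \<mu> k)) v) = 0"
      by (rule inj_onD[OF injC _ sIS[OF TS] V1.subspace_0[OF S]])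
    then have "\<forall>v\<in>T. u v * (\<mu> v - \<mu> k) = 0" using IH[rule_format, of "\<lambda>v. u v * (\<mu> v - \<mu> k)"] by blast
    then have uT: "\<forall>v\<in>T. u v = 0" using mu_ne by auto
    then have "(\<Sum>v\<in>T. s1 (u v) v) = 0" by simp
    then have "s1 (u k) k = 0" using sz' by simp
    then have "u k = 0" using k0 by simp
    then show "u v = 0" using v uT by auto
  qed
qed


lemma pencil:
  fixes P Q :: "'b::ab_group_add \<Rightarrow> 'c::ab_group_add"
  assumes vs1: "vector_space s1" and vs2: "vector_space s2" and S: "module.subspace s1 S"
    and B0: "finite B0" "S \<subseteq> module.span s1 B0"
    and addP: "\<And>x y. x \<in> S \<Longrightarrow> y \<in> S \<Longrightarrow> P (x + y) = P x + P y"
    and homP: "\<And>c x. x \<in> S \<Longrightarrow> P (s1 c x) = s2 c (P x)"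
    and addQ: "\<And>x y. x \<in> S \<Longrightarrow> y \<in> S \<Longrightarrow> Q (x + y) = Q x + Q y"
    and homQ: "\<And>c x. x \<in> S \<Longrightarrow> Q (s1 c x) = s2 c (Q x)"
    and inj0: "inj_on (\<lambda>y. P y + s2 t0 (Q y)) S"
  shows "finite {t. \<not> inj_on (\<lambda>y. P y + s2 t (Q y)) S}"
proof (rule ccontr)
  interpret V1: vector_space s1 by fact
  interpret V2: vector_space s2 by fact
  define R where "R t y = P y + s2 t (Q y)" for t y
  have addR: "\<And>x y. x \<in> S \<Longrightarrow> y \<in> S \<Longrightarrow> R t (x + y) = R t x + R t y" for t
    by (simp add: R_def addP addQ V2.scale_right_distrib)
  have homR: "\<And>c x. x \<in> S \<Longrightarrow> R t (s1 c x) = s2 c (R t x)" for t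
    by (simp add: R_def homP homQ V2.scale_right_distrib mult.commute)
  define Bad where "Bad = {t. \<not> inj_on (R t) S}"
  assume "infinite {t. \<not> inj_on (\<lambda>y. P y + s2 t (Q y)) S}"
  then have infB: "infinite Bad" unfolding Bad_def R_def by simp
  have ex: "\<exists>y. y \<in> S \<and> y \<noteq> 0 \<and> R t y = 0" if "t \<in> Bad" for t
  proof -
    from that obtain x1 x2 where x: "x1 \<in> S" "x2 \<in> S" "x1 \<noteq> x2" "R t x1 = R t x2"
      unfolding Bad_def inj_on_def by blast
    have "R t (x1 - x2) = R t x1 - R t x2" by (rule lin_diff[OF vs1 S addR x(1,2)])
    then show ?thesis using x V1.subspace_diff[OF S x(1,2)] by (intro exI[of _ "x1 - x2"]) auto
  qed
  define yv where "yv t = (SOME y. y \<in> S \<and> y \<noteq> 0 \<and> R t y = 0)" for t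
  have yv: "yv t \<in> S" "yv t \<noteq> 0" "R t (yv t) = 0" if "t \<in> Bad" for t
    using someI_ex[OF ex[OF that]] unfolding yv_def by auto
  define C where "C = R t0"
  have zC: "C 0 = 0" unfolding C_def by (rule lin_zero[OF vs1 S addR])
  have injC: "inj_on C S" using inj0 unfolding C_def R_def[abs_def] by simp
  have Cnz: "C y \<noteq> 0" if "y \<in> S" "y \<noteq> 0" for y
    using inj_onD[OF injC _ that(1) V1.subspace_0[OF S]] zC that by auto
  have t0B: "t \<noteq> t0" if "t \<in> Bad" for t
    using yv[OF that] Cnz unfolding C_def by auto
  define \<mu> where "\<mu> t = 1 / (t0 - t)" for t
  have Qy: "Q (yv t) = s2 (\<mu> t) (C (yv t))" if t: "t \<in> Bad" for t
  proof -
    have "P (yv t) = - s2 t (Q (yv t))" using yv(3)[OF t] by (simp add: R_def eq_neg_iff_add_eq_0)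
    then have "C (yv t) = s2 (t0 - t) (Q (yv t))"
      by (simp add: C_def R_def V2.scale_left_diff_distrib)
    then show ?thesis using t0B[OF t] by (simp add: \<mu>_def)
  qed
  have injyv: "inj_on yv Bad"
  proof
    fix t t' assume t: "t \<in> Bad" and t': "t' \<in> Bad" and e: "yv t = yv t'"
    have "s2 (\<mu> t) (C (yv t)) = s2 (\<mu> t') (C (yv t))" using Qy[OF t] Qy[OF t'] e by metis
    then have "\<mu> t = \<mu> t'" using Cnz[OF yv(1,2)[OF t]] by simp
    then show "t = t'" using t0B[OF t] t0B[OF t'] by (simp add: \<mu>_def)
  qed
  obtain Bf where Bf: "Bf \<subseteq> Bad" "finite Bf" "card Bf = Suc (card B0)"
    using infinite_arbitrarily_large[OF infB] by blast
  define T where "T = yv ` Bf"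
  have injT: "inj_on yv Bf" using injyv Bf(1) by (rule inj_on_subset)
  define m where "m v = \<mu> (the_inv_into Bf yv v)" for v
  have mT: "m (yv t) = \<mu> t" if "t \<in> Bf" for t
    using the_inv_into_f_f[OF injT that] by (simp add: m_def)
  have indT: "V1.independent T"
  proof (rule V1.independent_if_scalars_zero)
    show "finite T" using Bf(2) by (simp add: T_def)
    fix f x assume "(\<Sum>x\<in>T. s1 (f x) x) = 0" and x: "x \<in> T"
    moreover have "\<forall>u. (\<Sum>v\<in>T. s1 (u v) v) = 0 \<longrightarrow> (\<forall>v\<in>T. u v = 0)"
    proof (rule eigen_indep[where C=C and Q=Q and \<mu>=m, OF vs1 vs2 S])
      show "\<And>x y. x \<in> S \<Longrightarrow> y \<in> S \<Longrightarrow> C (x + y) = C x + C y" unfolding C_def by (rule addR)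
      show "\<And>c x. x \<in> S \<Longrightarrow> C (s1 c x) = s2 c (C x)" unfolding C_def by (rule homR)
      show "\<And>x y. x \<in> S \<Longrightarrow> y \<in> S \<Longrightarrow> Q (x + y) = Q x + Q y" by (rule addQ)
      show "\<And>c x. x \<in> S \<Longrightarrow> Q (s1 c x) = s2 c (Q x)" by (rule homQ)
      show "inj_on C S" by (rule injC)
      show "finite T" using Bf(2) by (simp add: T_def)
      show "T \<subseteq> S" using yv Bf(1) by (auto simp: T_def)
      show "0 \<notin> T" using yv Bf(1) by (auto simp: T_def)
      show "inj_on m T"
      proof
        fix a b assume "a \<in> T" "b \<in> T" "m a = m b"
        then obtain ta tb where ab: "ta \<in> Bf" "tb \<in> Bf" "a = yv ta" "b = yv tb" "\<mu> ta = \<mu> tb"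
          by (auto simp: T_def mT)
        then have "ta = tb" using t0B Bf(1) by (auto simp: \<mu>_def)
        then show "a = b" using ab by simp
      qed
      show "\<And>v. v \<in> T \<Longrightarrow> Q v = s2 (m v) (C v)" using Qy Bf(1) mT by (auto simp: T_def)
    qed
    ultimately show "f x = 0" by blast
  qed
  have "T \<subseteq> V1.span B0" using yv(1) Bf(1) B0(2) unfolding T_def by blast
  then have "card T \<le> card B0" using V1.independent_span_bound[OF B0(1) indT] by simp
  moreover have "card T = card Bf" unfolding T_def by (rule card_image[OF injT])
  ultimately show False using Bf(3) by simp
qed



locale ctxF = ctx +
  fixes F and YF and h
  assumes subF: "is_subfield F" and infF: "infinite F"
    and modYF: "left_module G F sc lm YF" and ratY: "rational_form F sc YF Y"
    and hinj: "inj_on h Y" and hL: "\<forall>y\<in>Y. h y \<in> grp_alg G UNIV"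
    and hadd: "\<forall>y\<in>Y. \<forall>z\<in>Y. h (y + z) = h y + h z"
    and heq: "\<forall>a\<in>grp_alg G UNIV. \<forall>y\<in>Y. h (lm a y) = conv G a (h y)"
begin

lemma hhom: "y \<in> Y \<Longrightarrow> h (sc c y) = ascale c (h y)"
  by (metis conv_scalar_left' hL heq lm_scalar scal_L)

lemma mod_ascale: "module ascale" using vs_ascale by (simp add: module_iff_vector_space)

lemma L_span: "grp_alg G UNIV \<subseteq> module.span ascale (delta ` carrier G)"
proof
  fix a assume a: "a \<in> grp_alg G UNIV"
  have "(\<Sum>g\<in>carrier G. ascale (a g) (delta g)) \<in> module.span ascale (delta ` carrier G)"
    by (intro module.span_sum[OF mod_ascale] module.span_scale[OF mod_ascale] module.span_base[OF mod_ascale]) auto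
  then show "a \<in> module.span ascale (delta ` carrier G)" using grp_alg_expand'[OF a] by simp
qed

lemma YF_sub: "YF \<subseteq> Y" using ratY by (simp add: rational_form_def)

lemma Y_span_YF: "Y = Yv.span YF"
  using ratY by (simp add: rational_form_def Yv.E_span_eq)

definition B where "B = (SOME B. B \<subseteq> YF \<and> Yv.independent B \<and> YF \<subseteq> Yv.span B)"

lemma B_props: "B \<subseteq> YF" "Yv.independent B" "YF \<subseteq> Yv.span B"
proof -
  obtain B' where "B' \<subseteq> YF" "Yv.independent B'" "YF \<subseteq> Yv.span B'"
    by (rule Yv.maximal_independent_subset)
  then have "\<exists>B. B \<subseteq> YF \<and> Yv.independent B \<and> YF \<subseteq> Yv.span B" by blast
  from someI_ex[OF this] show "B \<subseteq> YF" "Yv.independent B" "YF \<subseteq> Yv.span B"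
    unfolding B_def by auto
qed

lemma BY: "B \<subseteq> Y" using B_props(1) YF_sub by auto

lemma Y_span_B: "Y \<subseteq> Yv.span B"
proof -
  have "Yv.span YF \<subseteq> Yv.span B"
    using B_props(3) Yv.span_mono Yv.span_span by (metis)
  then show ?thesis using Y_span_YF by simp
qed

lemma span_B: "Yv.span B = Y"
  using Y_span_B Yv.span_minimal[OF BY Y_sub] by auto

lemma hhom': "\<And>c x. x \<in> Y \<Longrightarrow> h (sc c x) = ascale c (h x)" by (rule hhom)
lemma hadd': "\<And>x y. x \<in> Y \<Longrightarrow> y \<in> Y \<Longrightarrow> h (x + y) = h x + h y" using hadd by blast

lemma finB: "finite B"
proof -
  have ind: "\<not> module.dependent ascale (h ` B)"
    by (rule indep_image[where f=h, OF vs vs_ascale Y_sub hadd' hhom' hinj BY B_props(2)])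
  have "h ` B \<subseteq> module.span ascale (delta ` carrier G)" using hL BY L_span by auto
  then have "finite (h ` B)" using vector_space.independent_span_bound[OF vs_ascale _ ind, of "delta ` carrier G"] fin by blast
  then show ?thesis using finite_image_iff inj_on_subset[OF hinj BY] by blast
qed

abbreviation rep where "rep y b \<equiv> Yv.representation B y b"

lemma rep_add: "y \<in> Y \<Longrightarrow> z \<in> Y \<Longrightarrow> rep (y + z) b = rep y b + rep z b"
  using Yv.representation_add[OF B_props(2)] span_B by auto

lemma rep_scale: "y \<in> Y \<Longrightarrow> rep (sc t y) b = t * rep y b"
  using Yv.representation_scale[OF B_props(2)] span_B by auto

lemma rep_F:
  assumes y: "y \<in> YF"
  shows "rep y b \<in> F"
proof (cases "y \<in> B")
  case True
  then show ?thesis using Yv.representation_basis[OF B_props(2) True] subF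
    by (auto simp: is_subfield_def)
next
  case False
  have yspan: "y \<in> Yv.span B" using y B_props(3) by auto
  have "\<not> Yv.independent (insert y B)"
    using False yspan by (simp add: Yv.independent_insert)
  then have "\<not> K_indep UNIV sc (insert y B)" by (simp add: Yv.K_indep_UNIV)
  moreover have "insert y B \<subseteq> YF" using y B_props(1) by auto
  ultimately have "\<not> K_indep F sc (insert y B)" using ratY unfolding rational_form_def by blast
  then obtain T c where T: "finite T" "T \<subseteq> insert y B" "\<forall>t\<in>T. c t \<in> F"
      "(\<Sum>t\<in>T. sc (c t) t) = 0" "\<exists>t\<in>T. c t \<noteq> 0"
    unfolding K_indep_def by blast
  have yT: "y \<in> T \<and> c y \<noteq> 0"
  proof (rule ccontr)
    assume "\<not> (y \<in> T \<and> c y \<noteq> 0)"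
    then have "(\<Sum>t\<in>T - {y}. sc (c t) t) = 0"
      using T(1,4) by (metis (no_types, lifting) Diff_empty Diff_insert0 Yv.scale_zero_left add.left_neutral sum.remove)
    moreover have "T - {y} \<subseteq> B" using T(2) by auto
    ultimately have "\<forall>t\<in>T - {y}. c t = 0"
      using Yv.independentD[OF B_props(2), of "T - {y}" c] T(1) by blast
    then show False using T(5) \<open>\<not> (y \<in> T \<and> c y \<noteq> 0)\<close> by auto
  qed
  define T' where "T' = T - {y}"
  have T'B: "T' \<subseteq> B" using T(2) by (auto simp: T'_def)
  have "sc (c y) y + (\<Sum>t\<in>T'. sc (c t) t) = 0"
    using T(1,4) yT sum.remove[OF T(1), of y "\<lambda>t. sc (c t) t"] by (simp add: T'_def)
  then have eqy: "sc (c y) y = - (\<Sum>t\<in>T'. sc (c t) t)" by (simp add: eq_neg_iff_add_eq_0)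
  have "y = sc (inverse (c y)) (sc (c y) y)" using yT by simp
  also have "\<dots> = sc (inverse (c y)) (- (\<Sum>t\<in>T'. sc (c t) t))" by (simp only: eqy)
  also have "\<dots> = (\<Sum>t\<in>T'. sc (- c t / c y) t)"
    by (simp add: Yv.scale_sum_right sum_negf[symmetric] divide_inverse mult.commute)
  finally have "y = (\<Sum>t\<in>T'. sc (- c t / c y) t)" .
  then have yeq: "rep y b = rep (\<Sum>t\<in>T'. sc (- c t / c y) t) b" by (rule arg_cong)
  have prem: "\<And>t. t \<in> T' \<Longrightarrow> sc (- c t / c y) t \<in> Yv.span B"
    using T'B by (intro Yv.span_scale Yv.span_base) auto
  have "rep (\<Sum>t\<in>T'. sc (- c t / c y) t) = (\<lambda>b. \<Sum>t\<in>T'. rep (sc (- c t / c y) t) b)"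
    by (rule Yv.representation_sum[OF B_props(2) prem])
  then have "rep y b = (\<Sum>t\<in>T'. rep (sc (- c t / c y) t) b)" using yeq by simp
  also have "\<dots> = (\<Sum>t\<in>T'. (- c t / c y) * (if b = t then 1 else 0))"
  proof (rule sum.cong[OF refl])
    fix t assume t: "t \<in> T'"
    have tB: "t \<in> B" using t T'B by auto
    show "rep (sc (- c t / c y) t) b = (- c t / c y) * (if b = t then 1 else 0)"
      using Yv.representation_scale[OF B_props(2) Yv.span_base[OF tB], of "- c t / c y"]
        Yv.representation_basis[OF B_props(2) tB] by simp
  qed
  also have "\<dots> = (\<Sum>t\<in>T'. if t = b then - c t / c y else 0)"
    by (intro sum.cong) auto
  also have "\<dots> = (if b \<in> T' then - c b / c y else 0)"
    using T(1) by (simp add: T'_def)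
  also have "\<dots> \<in> F"
    using T(3) yT subF by (auto simp: T'_def subfield_div subfield_neg is_subfield_def)
  finally show ?thesis .
qed

definition phi where "phi c y = (\<Sum>b\<in>B. c b * rep y b)"

definition Lc where "Lc c y = (\<lambda>x. if x \<in> carrier G then phi c (lm (delta (inv x)) y) else 0)"

lemma phi_add: "y \<in> Y \<Longrightarrow> z \<in> Y \<Longrightarrow> phi c (y + z) = phi c y + phi c z"
  by (simp add: phi_def rep_add distrib_left sum.distrib)

lemma phi_scale: "y \<in> Y \<Longrightarrow> phi c (sc t y) = t * phi c y"
  by (simp add: phi_def rep_scale sum_distrib_left mult.left_commute)

lemma inv_carrier: "x \<in> carrier G \<Longrightarrow> inv x \<in> carrier G"
  using grp by (simp add: group.inv_closed)

lemma deltaL: "x \<in> carrier G \<Longrightarrow> delta x \<in> grp_alg G UNIV"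
  by (rule grp_alg_delta'[OF _ subfield_UNIV])

lemma lm_delta_in: "x \<in> carrier G \<Longrightarrow> y \<in> Y \<Longrightarrow> lm (delta (inv x)) y \<in> Y"
  by (rule lm_in[OF deltaL[OF inv_carrier]])

lemma Lc_L: "Lc c y \<in> grp_alg G UNIV"
  by (simp add: Lc_def grp_alg_def)

lemma Lc_add: "y \<in> Y \<Longrightarrow> z \<in> Y \<Longrightarrow> Lc c (y + z) = Lc c y + Lc c z"
  by (rule ext) (simp add: Lc_def lm_add_right[OF deltaL[OF inv_carrier]] phi_add lm_delta_in)

lemma Lc_hom: "y \<in> Y \<Longrightarrow> Lc c (sc t y) = ascale t (Lc c y)"
  by (rule ext) (simp add: Lc_def lm_sc[OF deltaL[OF inv_carrier]] phi_scale lm_delta_in)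

lemma phi_sum:
  assumes "\<And>i. i \<in> I \<Longrightarrow> w i \<in> Y"
  shows "phi c (\<Sum>i\<in>I. sc (a i) (w i)) = (\<Sum>i\<in>I. a i * phi c (w i))"
proof -
  have X: "K_subspace UNIV sc Y" using Y_sub by (simp add: Yv.K_subspace_UNIV)
  show ?thesis
    by (rule Yv.Klin_sum[where \<phi>="phi c", OF X subfield_UNIV]) (use assms in \<open>auto simp: phi_add phi_scale\<close>)
qed

lemma Lc_equiv:
  assumes a: "a \<in> grp_alg G UNIV" and y: "y \<in> Y"
  shows "Lc c (lm a y) = conv G a (Lc c y)"
proof
  fix x
  show "Lc c (lm a y) x = conv G a (Lc c y) x"
  proof (cases "x \<in> carrier G")
    case x: True
    have ix: "inv x \<in> carrier G" by (rule inv_carrier[OF x])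
    have cexp: "conv G (delta (inv x)) a = (\<Sum>g\<in>carrier G. ascale (a g) (delta (inv x \<otimes> g)))"
    proof -
      have "conv G (delta (inv x)) a = conv G (delta (inv x)) (\<Sum>g\<in>carrier G. ascale (a g) (delta g))"
        using grp_alg_expand'[OF a] by simp
      also have "\<dots> = (\<Sum>g\<in>carrier G. ascale (a g) (delta (inv x \<otimes> g)))"
        by (simp add: conv_sum_right' conv_ascale_right' conv_delta_delta' ix)
      finally show ?thesis .
    qed
    have mc: "\<And>g. g \<in> carrier G \<Longrightarrow> inv x \<otimes> g \<in> carrier G"
      using ix monoid.m_closed[OF group.is_monoid[OF grp]] by blast
    have "lm (delta (inv x)) (lm a y) = (\<Sum>g\<in>carrier G. sc (a g) (lm (delta (inv x \<otimes> g)) y))"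
      using cexp lm_conv[OF deltaL[OF ix] a y] y
      by (simp add: lm_sum_left lm_ascale deltaL grp_alg_ascale[OF grp fin] mc)
    then have "Lc c (lm a y) x = (\<Sum>g\<in>carrier G. a g * phi c (lm (delta (inv x \<otimes> g)) y))"
      using x y phi_sum[of "carrier G" "\<lambda>g. lm (delta (inv x \<otimes> g)) y" c a]
      by (simp add: Lc_def lm_in deltaL mc)
    also have "\<dots> = (\<Sum>g\<in>carrier G. a g * Lc c y (inv g \<otimes> x))"
    proof (rule sum.cong[OF refl])
      fix g assume g: "g \<in> carrier G"
      have "inv (inv g \<otimes> x) = inv x \<otimes> g"
        using g x grp by (simp add: group.inv_mult_group group.inv_closed group.inv_inv)
      moreover have "inv g \<otimes> x \<in> carrier G"
        using g x grp by (simp add: group.inv_closed monoid.m_closed[OF group.is_monoid[OF grp]])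
      ultimately show "a g * phi c (lm (delta (inv x \<otimes> g)) y) = a g * Lc c y (inv g \<otimes> x)"
        by (simp add: Lc_def)
    qed
    also have "\<dots> = conv G a (Lc c y) x" using x by (simp add: conv_def)
    finally show ?thesis .
  next
    case False then show ?thesis by (simp add: Lc_def conv_def)
  qed
qed

lemma Lc_rat:
  assumes y: "y \<in> YF" and c: "\<forall>b\<in>B. c b \<in> F"
  shows "Lc c y \<in> grp_alg G F"
proof -
  have "Lc c y x \<in> F" for x
  proof (cases "x \<in> carrier G")
    case True
    have "lm (delta (inv x)) y \<in> YF"
      using modYF y grp_alg_delta'[OF inv_carrier[OF True] subF] by (simp add: left_module_def)
    then have "phi c (lm (delta (inv x)) y) \<in> F"
      unfolding phi_def using c rep_F subF
      by (intro subfield_sum[OF subF]) (auto simp: is_subfield_def)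
    then show ?thesis using True by (simp add: Lc_def)
  next
    case False then show ?thesis using subF by (simp add: Lc_def is_subfield_def)
  qed
  then show ?thesis using Lc_L by (simp add: grp_alg_def)
qed

definition c0 where "c0 b = h b \<one>"

lemma Lc_c0: "y \<in> Y \<Longrightarrow> Lc c0 y = h y"
proof
  fix x assume y: "y \<in> Y"
  show "Lc c0 y x = h y x"
  proof (cases "x \<in> carrier G")
    case x: True
    define w where "w = lm (delta (inv x)) y"
    have wY: "w \<in> Y" using lm_delta_in[OF x y] by (simp add: w_def)
    have "h y x = conv G (delta (inv x)) (h y) \<one>"
      using conv_delta_at_one'[OF inv_carrier[OF x], of "h y"] x grp by (simp add: group.inv_inv)
    also have "\<dots> = h w \<one>" using heq deltaL[OF inv_carrier[OF x]] y unfolding w_def by metis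
    also have "w = (\<Sum>b\<in>B. sc (rep w b) b)"
      using Yv.sum_representation_eq[OF B_props(2) _ finB subset_refl] wY span_B by simp
    also have "h (\<Sum>b\<in>B. sc (rep w b) b) = (\<Sum>b\<in>B. ascale (rep w b) (h b))"
      by (rule lin_sum_gen[where f=h, OF vs vs_ascale Y_sub hadd' hhom' BY])
    also have "(\<Sum>b\<in>B. ascale (rep w b) (h b)) \<one> = phi c0 w"
      by (simp add: sumf_apply phi_def c0_def mult.commute)
    finally show ?thesis using x by (simp add: Lc_def w_def)
  next
    case False then show ?thesis using hL y by (simp add: Lc_def grp_alg_def)
  qed
qed

lemma Lc_upd:
  assumes b0: "b0 \<in> B"
  shows "Lc (c(b0 := t)) y = Lc (c(b0 := 0)) y + ascale t (Lc (\<lambda>b. if b = b0 then 1 else 0) y)"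
proof -
  have "phi (c(b0 := t)) w = phi (c(b0 := 0)) w + t * phi (\<lambda>b. if b = b0 then 1 else 0) w" for w
  proof -
    have "phi (c(b0 := t)) w = (\<Sum>b\<in>B. (c(b0 := 0)) b * rep w b + (if b = b0 then t * rep w b else 0))"
      unfolding phi_def by (intro sum.cong) auto
    also have "\<dots> = phi (c(b0 := 0)) w + t * rep w b0"
      using finB b0 by (simp add: sum.distrib phi_def)
    also have "phi (\<lambda>b. if b = b0 then 1 else 0) w = rep w b0"
      using finB b0 by (simp add: phi_def if_distrib[of "\<lambda>x. x * _"] cong: if_cong)
    ultimately show ?thesis by simp
  qed
  then show ?thesis by (intro ext) (simp add: Lc_def)
qed

lemma rational_choice:
  assumes "finite S" "S \<subseteq> B"
  shows "\<exists>c. (\<forall>b\<in>S. c b \<in> F) \<and> inj_on (Lc c) Y"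
  using assms
proof (induction S rule: finite_induct)
  case empty
  have "inj_on (Lc c0) Y" using hinj Lc_c0 inj_on_cong by metis
  then show ?case by blast
next
  case (insert b0 S)
  then obtain c where cF: "\<forall>b\<in>S. c b \<in> F" and injc: "inj_on (Lc c) Y" by auto
  have b0: "b0 \<in> B" using insert.prems by auto
  define P where "P = Lc (c(b0 := 0))"
  define Q where "Q = Lc (\<lambda>b. if b = b0 then 1 else 0)"
  have eqt: "Lc (c(b0 := t)) y = P y + ascale t (Q y)" for t y
    unfolding P_def Q_def by (rule Lc_upd[OF b0])
  have "(\<lambda>y. P y + ascale (c b0) (Q y)) = Lc c"
    using eqt[of "c b0"] by (simp add: fun_eq_iff)
  then have inj0: "inj_on (\<lambda>y. P y + ascale (c b0) (Q y)) Y"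
    using injc by simp
  have fin_bad: "finite {t. \<not> inj_on (\<lambda>y. P y + ascale t (Q y)) Y}"
  proof (rule pencil[OF vs vs_ascale Y_sub finB Y_span_B _ _ _ _ inj0])
    show "\<And>x y. x \<in> Y \<Longrightarrow> y \<in> Y \<Longrightarrow> P (x + y) = P x + P y" by (simp add: P_def Lc_add)
    show "\<And>c x. x \<in> Y \<Longrightarrow> P (sc c x) = ascale c (P x)" by (simp add: P_def Lc_hom)
    show "\<And>x y. x \<in> Y \<Longrightarrow> y \<in> Y \<Longrightarrow> Q (x + y) = Q x + Q y" by (simp add: Q_def Lc_add)
    show "\<And>c x. x \<in> Y \<Longrightarrow> Q (sc c x) = ascale c (Q x)" by (simp add: Q_def Lc_hom)
  qed
  have "infinite (F - {t. \<not> inj_on (\<lambda>y. P y + ascale t (Q y)) Y})"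
    using Diff_infinite_finite[OF fin_bad infF] .
  then have "F - {t. \<not> inj_on (\<lambda>y. P y + ascale t (Q y)) Y} \<noteq> {}" by (intro notI) simp
  then obtain t where "t \<in> F - {t. \<not> inj_on (\<lambda>y. P y + ascale t (Q y)) Y}" by blast
  then have t: "t \<in> F" "inj_on (\<lambda>y. P y + ascale t (Q y)) Y" by auto
  have "Lc (c(b0 := t)) = (\<lambda>y. P y + ascale t (Q y))" by (rule ext) (rule eqt)
  then have "inj_on (Lc (c(b0 := t))) Y" using t(2) by simp
  moreover have "\<forall>b\<in>insert b0 S. (c(b0 := t)) b \<in> F" using cF t(1) by auto
  ultimately show ?case by blast
qed

lemma rational_embedding:
  "\<exists>h'. inj_on h' Y \<and> (\<forall>y\<in>Y. h' y \<in> grp_alg G UNIV)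
     \<and> (\<forall>y\<in>Y. \<forall>z\<in>Y. h' (y + z) = h' y + h' z)
     \<and> (\<forall>c. \<forall>y\<in>Y. h' (sc c y) = ascale c (h' y))
     \<and> (\<forall>a\<in>grp_alg G UNIV. \<forall>y\<in>Y. h' (lm a y) = conv G a (h' y))
     \<and> (\<forall>y\<in>YF. h' y \<in> grp_alg G F)"
proof -
  obtain c where c: "\<forall>b\<in>B. c b \<in> F" "inj_on (Lc c) Y"
    using rational_choice[OF finB subset_refl] by blast
  show ?thesis
    by (rule exI[of _ "Lc c"]) (use c in \<open>auto simp: Lc_L Lc_add Lc_hom Lc_equiv Lc_rat\<close>)
qed

end


locale ctxG = ctx +
  fixes F ZF Z D h'
  assumes subF: "is_subfield F"
    and Dsub: "D \<subseteq> carrier G"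
    and Zsub: "Yv.subspace Z" and ZY: "Z \<subseteq> Y" and Zspan: "Z = Yv.span ZF" and ZFZ: "ZF \<subseteq> Z"
    and modZF: "D_submodule D F sc lm ZF"
    and hinj: "inj_on h' Y" and hL: "\<forall>y\<in>Y. h' y \<in> grp_alg G UNIV"
    and hadd: "\<forall>y\<in>Y. \<forall>z\<in>Y. h' (y + z) = h' y + h' z"
    and hhom: "\<forall>c. \<forall>y\<in>Y. h' (sc c y) = ascale c (h' y)"
    and heq: "\<forall>a\<in>grp_alg G UNIV. \<forall>y\<in>Y. h' (lm a y) = conv G a (h' y)"
    and hrat: "\<forall>z\<in>ZF. h' z \<in> grp_alg G F"
begin

definition beta where "beta m w = conv G m w \<one>"
definition A where "A = h' ` Z"
definition V where "V = {v \<in> grp_alg G UNIV. \<forall>w\<in>A. beta v w = 0}"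

lemma beta_add1: "beta (u + u') w = beta u w + beta u' w"
  by (simp add: beta_def conv_add_left')
lemma beta_add2: "beta u (w + w') = beta u w + beta u w'"
  by (simp add: beta_def conv_add_right')
lemma beta_sc1: "beta (ascale c u) w = c * beta u w"
  by (simp add: beta_def conv_ascale_left')
lemma beta_sc2: "beta u (ascale c w) = c * beta u w"
  by (simp add: beta_def conv_ascale_right')
lemma beta_zero2: "beta u 0 = 0"
  by (simp add: beta_def conv_zero_right')
lemma beta_zero1: "beta 0 w = 0"
  by (simp add: beta_def conv_zero_left')

lemma beta_delta: assumes x: "x \<in> carrier G" shows "beta (delta (inv x)) w = w x"
  using conv_delta_at_one'[OF group.inv_closed[OF grp x], of w] grp x
  by (simp add: beta_def group.inv_inv)

lemma hadd': "x \<in> Y \<Longrightarrow> y \<in> Y \<Longrightarrow> h' (x + y) = h' x + h' y" using hadd by blast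
lemma hhom': "x \<in> Y \<Longrightarrow> h' (sc c x) = ascale c (h' x)" using hhom by blast

lemma h0: "h' 0 = 0"
  by (rule lin_zero[OF vs Y_sub hadd'])

lemma LsubS: "grp_alg G UNIV \<subseteq> module.span ascale (delta ` carrier G)"
proof
  fix a assume a: "a \<in> grp_alg G UNIV"
  have m: "module ascale" using vs_ascale by (simp add: module_iff_vector_space)
  have "(\<Sum>g\<in>carrier G. ascale (a g) (delta g)) \<in> module.span ascale (delta ` carrier G)"
    by (intro module.span_sum[OF m] module.span_scale[OF m] module.span_base[OF m]) auto
  then show "a \<in> module.span ascale (delta ` carrier G)" using grp_alg_expand'[OF a] by simp
qed


lemma hmem: "y \<in> Y \<Longrightarrow> h' y \<in> grp_alg G UNIV" using hL by blast

lemma Kset_sub: assumes M: "M \<subseteq> grp_alg G UNIV" shows "Yv.subspace (Kset M Z)"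
proof (rule Yv.subspaceI)
  show "0 \<in> Kset M Z" using Yv.subspace_0[OF Zsub] M by (auto simp: Kset_def lm_zero_right)
next
  fix x y assume x: "x \<in> Kset M Z" and y: "y \<in> Kset M Z"
  then show "x + y \<in> Kset M Z" using Yv.subspace_add[OF Zsub] M ZY
    by (auto simp: Kset_def lm_add_right subset_iff)
next
  fix c x assume x: "x \<in> Kset M Z"
  then show "sc c x \<in> Kset M Z" using Yv.subspace_scale[OF Zsub] M ZY
    by (auto simp: Kset_def lm_sc subset_iff)
qed

lemma Kset_img:
  assumes M: "left_ideal G UNIV M"
  shows "h' ` Kset M Z = {w \<in> A. \<forall>m\<in>M. beta m w = 0}"
proof -
  have MLa: "M \<subseteq> grp_alg G UNIV" using M by (simp add: left_ideal_def)
  have Mcl: "\<And>a m. a \<in> grp_alg G UNIV \<Longrightarrow> m \<in> M \<Longrightarrow> conv G a m \<in> M" using M by (simp add: left_ideal_def)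
  show ?thesis
  proof
    show "h' ` Kset M Z \<subseteq> {w \<in> A. \<forall>m\<in>M. beta m w = 0}"
    proof
      fix w assume "w \<in> h' ` Kset M Z"
      then obtain z where z: "z \<in> Z" "\<forall>m\<in>M. lm m z = 0" "w = h' z" by (auto simp: Kset_def)
      have "beta m w = 0" if m: "m \<in> M" for m
      proof -
        have "conv G m (h' z) = h' (lm m z)" using heq m MLa z(1) ZY by (metis subsetD)
        then show ?thesis using z m h0 by (simp add: beta_def)
      qed
      then show "w \<in> {w \<in> A. \<forall>m\<in>M. beta m w = 0}" using z by (auto simp: A_def)
    qed
  next
    show "{w \<in> A. \<forall>m\<in>M. beta m w = 0} \<subseteq> h' ` Kset M Z"
    proof
      fix w assume "w \<in> {w \<in> A. \<forall>m\<in>M. beta m w = 0}"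
      then obtain z where z: "z \<in> Z" "w = h' z" and bw: "\<forall>m\<in>M. beta m w = 0" by (auto simp: A_def)
      have zY: "z \<in> Y" using z ZY by auto
      have "lm m z = 0" if m: "m \<in> M" for m
      proof -
        have mL: "m \<in> grp_alg G UNIV" using m MLa by auto
        have c0: "conv G m w = 0"
        proof
          fix x show "conv G m w x = 0 x"
          proof (cases "x \<in> carrier G")
            case x: True
            have dL: "delta (inv x) \<in> grp_alg G UNIV"
              by (rule grp_alg_delta'[OF group.inv_closed[OF grp x] subfield_UNIV])
            have "conv G m w x = beta (delta (inv x)) (conv G m w)" by (simp add: beta_delta x)
            also have "\<dots> = beta (conv G (delta (inv x)) m) w"
              by (simp add: beta_def conv_assoc'[OF dL mL])
            also have "\<dots> = 0" using bw Mcl[OF dL m] by blast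
            finally show ?thesis by simp
          qed (simp add: conv_def)
        qed
        have "h' (lm m z) = h' 0" using heq mL zY c0 z(2) h0 by simp
        then show ?thesis
          by (rule inj_onD[OF hinj _ lm_in[OF mL zY] Yv.subspace_0[OF Y_sub]])
      qed
      then show "w \<in> h' ` Kset M Z" using z by (auto simp: Kset_def)
    qed
  qed
qed

lemma A_sub: "module.subspace ascale A"
proof -
  have m: "module ascale" using vs_ascale by (simp add: module_iff_vector_space)
  show ?thesis
  proof (rule module.subspaceI[OF m])
    show "0 \<in> A" using Yv.subspace_0[OF Zsub] h0 by (auto simp: A_def intro: image_eqI[of _ _ 0])
  next
    fix x y assume "x \<in> A" "y \<in> A"
    then obtain a b where "a \<in> Z" "b \<in> Z" "x = h' a" "y = h' b" by (auto simp: A_def)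
    then show "x + y \<in> A" using hadd' ZY Yv.subspace_add[OF Zsub] unfolding A_def
      by (metis image_eqI subsetD)
  next
    fix c x assume "x \<in> A"
    then obtain a where "a \<in> Z" "x = h' a" by (auto simp: A_def)
    then show "ascale c x \<in> A" using hhom' ZY Yv.subspace_scale[OF Zsub] unfolding A_def
      by (metis image_eqI subsetD)
  qed
qed

lemma AL: "A \<subseteq> grp_alg G UNIV" using hmem ZY by (auto simp: A_def)

lemma key:
  assumes M: "left_ideal G UNIV M"
  shows "Hdim sc (HomG G M lm Y Z) + Edim M = Edim A + Edim (M \<inter> V)"
proof -
  have MLa: "M \<subseteq> grp_alg G UNIV" using M by (simp add: left_ideal_def)
  have Msub: "module.subspace ascale M"
    using M vector_space.K_subspace_UNIV[OF vs_ascale, of M] unfolding left_ideal_def by blast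
  have 1: "Hdim sc (HomG G M lm Y Z) = Yv.dim (Kset M Z)"
    by (rule hom_dim[OF MLa Zsub ZY])
  have KY: "Kset M Z \<subseteq> Y" using ZY by (auto simp: Kset_def)
  have 2: "Edim (h' ` Kset M Z) = Yv.dim (Kset M Z)"
  proof (rule dim_iso[where f=h', OF vs vs_ascale Kset_sub[OF MLa]])
    show "\<And>x y. x \<in> Kset M Z \<Longrightarrow> y \<in> Kset M Z \<Longrightarrow> h' (x + y) = h' x + h' y"
      using hadd' KY by blast
    show "\<And>c x. x \<in> Kset M Z \<Longrightarrow> h' (sc c x) = ascale c (h' x)" using hhom' KY by blast
    show "inj_on h' (Kset M Z)" using inj_on_subset[OF hinj KY] .
  qed
  have 3: "Edim M + Edim {w\<in>A. \<forall>u\<in>M. beta u w = 0} = Edim A + Edim {u\<in>M. \<forall>w\<in>A. beta u w = 0}"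
  proof (rule vector_space.rank_eq[OF vs_ascale Msub A_sub])
    show "finite (delta ` carrier G)" using fin by simp
    show "M \<subseteq> module.span ascale (delta ` carrier G)" using MLa LsubS by auto
    show "A \<subseteq> module.span ascale (delta ` carrier G)" using AL LsubS by auto
  qed (auto simp: beta_add1 beta_add2 beta_sc1 beta_sc2)
  have 4: "{u\<in>M. \<forall>w\<in>A. beta u w = 0} = M \<inter> V" using MLa by (auto simp: V_def)
  show ?thesis using 1 2 3 4 Kset_img[OF M] by simp
qed


lemma gaF_sub: "K_subspace F ascale (grp_alg G F)"
  using subF unfolding K_subspace_def grp_alg_def is_subfield_def by auto

lemma ZF_Y: "ZF \<subseteq> Y" using ZFZ ZY by auto

lemma hZF_F: "h' ` ZF \<subseteq> grp_alg G F" using hrat by auto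

lemma beta_F: "v \<in> grp_alg G F \<Longrightarrow> a \<in> grp_alg G F \<Longrightarrow> beta v a \<in> F"
  using conv_grp_alg_K'[OF subF] by (simp add: beta_def grp_alg_def)

lemma beta_sum1: "beta (sum f S) w = (\<Sum>i\<in>S. beta (f i) w)"
  by (simp add: beta_def conv_sum_left' sumf_apply)

lemma beta_diff1: "beta (x - y) w = beta x w - beta y w"
proof -
  have e: "x - y = x + ascale (-1) y" by (simp add: fun_eq_iff ascale_def)
  have "beta (x - y) w = beta x w + beta (ascale (-1) y) w" unfolding e by (rule beta_add1)
  also have "\<dots> = beta x w - beta y w" unfolding beta_sc1 by simp
  finally show ?thesis .
qed

lemma mod_asc: "module ascale" using vs_ascale by (simp add: module_iff_vector_space)

lemma beta_span:
  assumes "\<forall>a\<in>S0. beta u a = 0" and w: "w \<in> module.span ascale S0"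
  shows "beta u w = 0"
proof -
  have sub: "module.subspace ascale {w. beta u w = 0}"
    by (rule module.subspaceI[OF mod_asc]) (auto simp: beta_add2 beta_sc2 beta_zero2)
  have "S0 \<subseteq> {w. beta u w = 0}" using assms(1) by auto
  then show ?thesis using module.span_minimal[OF mod_asc _ sub] w by auto
qed

lemma A_span: "A \<subseteq> module.span ascale (h' ` ZF)"
proof
  fix w assume "w \<in> A"
  then obtain z where z: "z \<in> Z" "w = h' z" by (auto simp: A_def)
  have "z \<in> Yv.span ZF" using z Zspan by simp
  then show "w \<in> module.span ascale (h' ` ZF)"
    using lin_span_image[where f=h', OF vs vs_ascale Y_sub hadd' hhom' ZF_Y, of z] z by blast
qed

definition VF where "VF = {v \<in> grp_alg G F. \<forall>z\<in>ZF. beta v (h' z) = 0}"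

lemma VF_sub_V: "VF \<subseteq> V"
proof
  fix v assume v: "v \<in> VF"
  have "\<forall>a\<in>h' ` ZF. beta v a = 0" using v by (auto simp: VF_def)
  then have "\<forall>w\<in>A. beta v w = 0" using beta_span A_span by blast
  then show "v \<in> V" using v by (auto simp: V_def VF_def intro: grp_alg_mono[OF grp fin])
qed

lemma V_sub: "module.subspace ascale V"
  by (rule module.subspaceI[OF mod_asc])
     (auto simp: V_def beta_add1 beta_sc1 beta_zero1 grp_alg_def)

lemma V_in_span: "V \<subseteq> module.span ascale VF"
proof -
  obtain A0 where A0: "A0 \<subseteq> h' ` ZF" "\<not> module.dependent ascale A0" "h' ` ZF \<subseteq> module.span ascale A0"
    using vector_space.maximal_independent_subset[OF vs_ascale, of "h' ` ZF"] by blast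
  have A0F: "A0 \<subseteq> grp_alg G F" using A0(1) hZF_F by auto
  have A0A: "A0 \<subseteq> A" using A0(1) ZFZ by (auto simp: A_def)
  have finA0: "finite A0"
  proof -
    have "A0 \<subseteq> module.span ascale (delta ` carrier G)"
      using A0F LsubS grp_alg_mono[OF grp fin] by blast
    then show ?thesis using vector_space.independent_span_bound[OF vs_ascale _ A0(2), of "delta ` carrier G"] fin
      by blast
  qed
  have "\<exists>w. (\<forall>t\<in>A0. w t \<in> grp_alg G F) \<and> (\<forall>t\<in>A0. \<forall>t'\<in>A0. beta (w t) t' = (if t' = t then 1 else 0))"
  proof -
    have ind: "\<forall>c. (\<forall>t\<in>A0. c t \<in> F) \<longrightarrow> (\<forall>x\<in>grp_alg G F. (\<Sum>t\<in>A0. c t * beta x t) = 0) \<longrightarrow> (\<forall>t\<in>A0. c t = 0)"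
    proof (intro allI impI ballI)
      fix c t assume cF: "\<forall>t\<in>A0. c t \<in> F" and z: "\<forall>x\<in>grp_alg G F. (\<Sum>t\<in>A0. c t * beta x t) = 0"
        and t: "t \<in> A0"
      have "(\<Sum>a\<in>A0. ascale (c a) a) = 0"
      proof
        fix x show "(\<Sum>a\<in>A0. ascale (c a) a) x = 0 x"
        proof (cases "x \<in> carrier G")
          case x: True
          have "delta (inv x) \<in> grp_alg G F"
            by (rule grp_alg_delta'[OF group.inv_closed[OF grp x] subF])
          then have "(\<Sum>t\<in>A0. c t * beta (delta (inv x)) t) = 0" using z by blast
          then show ?thesis by (simp add: sumf_apply beta_delta x)
        next
          case False
          then show ?thesis using A0F by (auto simp: sumf_apply grp_alg_def intro!: sum.neutral)
        qed
      qed
      then show "c t = 0"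
        using module.independentD[OF mod_asc A0(2) finA0 subset_refl] t by blast
    qed
    have p1: "\<forall>t\<in>A0. \<forall>x\<in>grp_alg G F. \<forall>y\<in>grp_alg G F. beta (x + y) t = beta x t + beta y t"
      by (simp add: beta_add1)
    have p2: "\<forall>t\<in>A0. \<forall>c\<in>F. \<forall>x\<in>grp_alg G F. beta (ascale c x) t = c * beta x t"
      by (simp add: beta_sc1)
    have p3: "\<forall>t\<in>A0. \<forall>x\<in>grp_alg G F. beta x t \<in> F"
      using beta_F A0F by blast
    note D = vector_space.dual_basis[OF vs_ascale subF gaF_sub finA0, of "\<lambda>t x. beta x t"]
    show ?thesis by (rule mp[OF mp[OF mp[OF mp[OF D p1] p2] p3] ind])
  qed
  then obtain w where wF: "\<forall>t\<in>A0. w t \<in> grp_alg G F"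
    and wd: "\<forall>t\<in>A0. \<forall>t'\<in>A0. beta (w t) t' = (if t' = t then 1 else 0)" by blast
  define P where "P x = x - (\<Sum>a\<in>A0. ascale (beta x a) (w a))" for x
  have Padd: "P (x + y) = P x + P y" for x y
    by (simp add: P_def beta_add1 fun_eq_iff sumf_apply distrib_right sum.distrib)
  have Psc: "P (ascale c x) = ascale c (P x)" for c x
    by (simp add: P_def beta_sc1 fun_eq_iff sumf_apply sum_distrib_left algebra_simps)
  have P0: "P 0 = 0" by (simp add: P_def beta_zero1 fun_eq_iff sumf_apply)
  have Psum: "P (sum f S) = (\<Sum>i\<in>S. P (f i))" if "S \<subseteq> carrier G" for f S
  proof (induction S rule: infinite_finite_induct)
    case (infinite A) then show ?case by (simp only: sum.infinite[OF infinite] P0)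
  next
    case empty then show ?case by (simp only: sum.empty P0)
  next
    case (insert x F)
    have "P (sum f (insert x F)) = P (f x + sum f F)" by (simp only: sum.insert[OF insert(1,2)])
    also have "\<dots> = P (f x) + P (sum f F)" by (rule Padd)
    also have "\<dots> = (\<Sum>i\<in>insert x F. P (f i))" by (simp only: sum.insert[OF insert(1,2)] insert(3))
    finally show ?case .
  qed
  have PV: "P v = v" if v: "v \<in> V" for v
  proof -
    have "\<forall>a\<in>A0. beta v a = 0" using v A0A by (auto simp: V_def)
    then show ?thesis by (simp add: P_def)
  qed
  have PVF: "P (delta g) \<in> VF" if g: "g \<in> carrier G" for g
  proof -
    have dF: "delta g \<in> grp_alg G F" by (rule grp_alg_delta'[OF g subF])
    have sF: "(\<Sum>a\<in>A0. ascale (beta (delta g) a) (w a)) \<in> grp_alg G F"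
      using vector_space.K_subspace_sum[OF vs_ascale gaF_sub subF, of A0 "\<lambda>a. beta (delta g) a" w]
        beta_F[OF dF] A0F wF by auto
    have PF: "P (delta g) \<in> grp_alg G F"
      unfolding P_def by (rule vector_space.K_subspace_diff[OF vs_ascale gaF_sub subF dF sF])
    have bz: "beta (P (delta g)) a' = 0" if a': "a' \<in> A0" for a'
    proof -
      have "beta (P (delta g)) a' = beta (delta g) a' - (\<Sum>a\<in>A0. beta (delta g) a * beta (w a) a')"
        by (simp add: P_def beta_diff1 beta_sum1 beta_sc1)
      also have "(\<Sum>a\<in>A0. beta (delta g) a * beta (w a) a') = (\<Sum>a\<in>A0. if a = a' then beta (delta g) a else 0)"
        using wd a' by (intro sum.cong) auto
      also have "\<dots> = beta (delta g) a'" using finA0 a' by simp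
      finally show ?thesis by simp
    qed
    have "\<forall>z\<in>ZF. beta (P (delta g)) (h' z) = 0"
      using beta_span[of A0 "P (delta g)"] bz A0(3) by blast
    then show ?thesis using PF by (simp add: VF_def)
  qed
  show ?thesis
  proof
    fix v assume v: "v \<in> V"
    then have vL: "v \<in> grp_alg G UNIV" by (simp add: V_def)
    have "v = P v" using PV[OF v] by simp
    also have "\<dots> = P (\<Sum>g\<in>carrier G. ascale (v g) (delta g))" using grp_alg_expand'[OF vL] by simp
    also have "\<dots> = (\<Sum>g\<in>carrier G. ascale (v g) (P (delta g)))" by (simp add: Psum Psc)
    also have "\<dots> \<in> module.span ascale VF"
      using PVF by (intro module.span_sum[OF mod_asc] module.span_scale[OF mod_asc] module.span_base[OF mod_asc]) auto
    finally show "v \<in> module.span ascale VF" .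
  qed
qed

lemma V_rat: "right_rational_sub G D F V"
  unfolding right_rational_sub_def
proof (intro exI conjI)
  show "VF \<subseteq> grp_alg G F" by (auto simp: VF_def)
  show "K_subspace F ascale VF"
    using subF unfolding K_subspace_def VF_def
    by (auto simp: grp_alg_def is_subfield_def beta_add1 beta_sc1 beta_zero1)
  show "\<forall>v\<in>VF. \<forall>b\<in>sub_alg D F. conv G v b \<in> VF"
  proof (intro ballI)
    fix v b assume v: "v \<in> VF" and b: "b \<in> sub_alg D F"
    have bF: "b \<in> grp_alg G F" using b Dsub by (auto simp: sub_alg_def grp_alg_def)
    have vF: "v \<in> grp_alg G F" using v by (simp add: VF_def)
    have "beta (conv G v b) (h' z) = 0" if z: "z \<in> ZF" for z
    proof -
      have zY: "z \<in> Y" using z ZF_Y by auto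
      have "beta (conv G v b) (h' z) = beta v (conv G b (h' z))"
        by (simp add: beta_def conv_assoc'[OF grp_alg_mono[OF grp fin,OF vF] grp_alg_mono[OF grp fin,OF bF]])
      also have "conv G b (h' z) = h' (lm b z)" using heq grp_alg_mono[OF grp fin,OF bF] zY by simp
      also have "lm b z \<in> ZF" using modZF b z by (simp add: D_submodule_def)
      then have "beta v (h' (lm b z)) = 0" using v by (simp add: VF_def)
      finally show ?thesis .
    qed
    then show "conv G v b \<in> VF" using conv_grp_alg_K'[OF subF vF bF] by (simp add: VF_def)
  qed
  show "V = E_span ascale VF"
    unfolding vector_space.E_span_eq[OF vs_ascale]
    using V_in_span module.span_minimal[OF mod_asc VF_sub_V V_sub] by auto
qed

end


lemma iso_dim:
  assumes grp: "group G" and fin: "finite (carrier G)"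
    and M: "left_ideal G UNIV M" and N: "left_ideal G UNIV N" and iso: "ideal_iso G M N"
  shows "Edim M = Edim N"
proof -
  obtain f where f: "bij_betw f M N" "\<forall>x\<in>M. \<forall>y\<in>M. f (x + y) = f x + f y"
    "\<forall>a\<in>grp_alg G UNIV. \<forall>x\<in>M. f (conv G a x) = conv G a (f x)"
    using iso unfolding ideal_iso_def by blast
  have MLa: "M \<subseteq> grp_alg G UNIV" using M by (simp add: left_ideal_def)
  have NLa: "N \<subseteq> grp_alg G UNIV" using N by (simp add: left_ideal_def)
  have Msub: "module.subspace ascale M"
    using M vector_space.K_subspace_UNIV[OF vs_ascale, of M] unfolding left_ideal_def by blast
  have one: "\<one>\<^bsub>G\<^esub> \<in> carrier G" using grp by (simp add: group.is_monoid monoid.one_closed)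
  have sL: "ascale c (delta \<one>\<^bsub>G\<^esub>) \<in> grp_alg G UNIV" for c
    using grp_alg_delta[OF grp fin one subfield_UNIV] by (auto simp: grp_alg_def)
  have hom: "f (ascale c x) = ascale c (f x)" if x: "x \<in> M" for c x
  proof -
    have xL: "x \<in> grp_alg G UNIV" using x MLa by auto
    have fxL: "f x \<in> grp_alg G UNIV" using x NLa f(1) by (auto simp: bij_betw_def)
    have "f (ascale c x) = f (conv G (ascale c (delta \<one>\<^bsub>G\<^esub>)) x)"
      using conv_scalar_left[OF grp fin xL] by simp
    also have "\<dots> = conv G (ascale c (delta \<one>\<^bsub>G\<^esub>)) (f x)" using f(3) sL x by blast
    also have "\<dots> = ascale c (f x)" using conv_scalar_left[OF grp fin fxL] by simp
    finally show ?thesis .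
  qed
  have "Edim (f ` M) = Edim M"
    by (rule dim_iso[where f=f, OF vs_ascale vs_ascale Msub])
       (use f hom in \<open>auto simp: bij_betw_def\<close>)
  then show ?thesis using f(1) by (simp add: bij_betw_def)
qed

theorem lemmaA12:
  fixes G :: "('g, 'b) monoid_scheme"
    and D :: "'g set"
    and F :: "'e::field_char_0 set"
    and M N :: "('g \<Rightarrow> 'e) set"
    and sc :: "'e \<Rightarrow> 'y::ab_group_add \<Rightarrow> 'y"
    and lm :: "('g \<Rightarrow> 'e) \<Rightarrow> 'y \<Rightarrow> 'y"
    and Y Z YF ZF :: "'y set"
  assumes "group G" and "finite (carrier G)" and "subgroup D G"
    and "is_subfield F" and "splitting_field G F"
    and "left_ideal G UNIV M" and "right_generic G D F M"
    and "vector_space sc"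
    and "left_module G UNIV sc lm Y"
    and "D_submodule D UNIV sc lm Z" and "Z \<subseteq> Y"
    and "left_module G F sc lm YF" and "rational_form F sc YF Y"
    and "D_submodule D F sc lm ZF" and "ZF \<subseteq> YF" and "rational_form F sc ZF Z"
    and "\<exists>h. inj_on h Y \<and> (\<forall>y\<in>Y. h y \<in> grp_alg G UNIV)
           \<and> (\<forall>y\<in>Y. \<forall>z\<in>Y. h (y + z) = h y + h z)
           \<and> (\<forall>a\<in>grp_alg G UNIV. \<forall>y\<in>Y. h (lm a y) = conv G a (h y))"
    and "left_ideal G UNIV N" and "ideal_iso G M N"
  shows "Hdim sc (HomG G M lm Y Z) \<le> Hdim sc (HomG G N lm Y Z)"
proof -
  note asm = assms
  have ctx0: "ctx G sc lm Y" using asm by (simp add: ctx_def)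
  interpret C: ctx G sc lm Y by (rule ctx0)
  obtain h where h: "inj_on h Y" "\<forall>y\<in>Y. h y \<in> grp_alg G UNIV"
      "\<forall>y\<in>Y. \<forall>z\<in>Y. h (y + z) = h y + h z"
      "\<forall>a\<in>grp_alg G UNIV. \<forall>y\<in>Y. h (lm a y) = conv G a (h y)"
    using asm(17) by blast
  have "ctxF G sc lm Y F YF h"
    unfolding ctxF_def ctxF_axioms_def using ctx0 asm h subfield_infinite[OF asm(4)] by auto
  then interpret CF: ctxF G sc lm Y F YF h .
  obtain h' where h': "inj_on h' Y" "\<forall>y\<in>Y. h' y \<in> grp_alg G UNIV"
     "\<forall>y\<in>Y. \<forall>z\<in>Y. h' (y + z) = h' y + h' z"
     "\<forall>c. \<forall>y\<in>Y. h' (sc c y) = ascale c (h' y)"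
     "\<forall>a\<in>grp_alg G UNIV. \<forall>y\<in>Y. h' (lm a y) = conv G a (h' y)"
     "\<forall>y\<in>YF. h' y \<in> grp_alg G F"
    using CF.rational_embedding by blast
  have Dsub: "D \<subseteq> carrier G" using asm(3) by (simp add: subgroup_def)
  have Zsub: "C.Yv.subspace Z"
    using asm(10) C.Yv.K_subspace_UNIV by (simp add: D_submodule_def)
  have Zspan: "Z = C.Yv.span ZF" and ZFZ: "ZF \<subseteq> Z"
    using asm(16) by (simp_all add: rational_form_def C.Yv.E_span_eq)
  have "ctxG G sc lm Y F ZF Z D h'"
    unfolding ctxG_def ctxG_axioms_def using ctx0 asm h' Dsub Zsub Zspan ZFZ by auto
  then interpret CG: ctxG G sc lm Y F ZF Z D h' .
  have kM: "Hdim sc (HomG G M lm Y Z) + Edim M = Edim CG.A + Edim (M \<inter> CG.V)"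
    by (rule CG.key[OF asm(6)])
  have kN: "Hdim sc (HomG G N lm Y Z) + Edim N = Edim CG.A + Edim (N \<inter> CG.V)"
    by (rule CG.key[OF asm(18)])
  have gen: "Edim (M \<inter> CG.V) \<le> Edim (N \<inter> CG.V)"
    using asm(7) CG.V_rat asm(18) asm(19) unfolding right_generic_def by blast
  have eq: "Edim M = Edim N" by (rule iso_dim[OF asm(1,2,6,18,19)])
  show ?thesis using kM kN gen eq by linarith
qed



end
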